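(* Let $C$ be a hereditary pointed coalgebra with Gabriel quiver $Q$. The following are equivalent: (1) $C$ is left f-qcF; (2) $C$ is right f-qcF; (3) $C$ is left qcF; (4) $C$ is right qcF; (5) $C$ is coFrobenius; (6) $C$ is cosemisimple; (7) $Q$ is discrete (has no arrows).
   Context: $\Bbbk$ is a field; all coalgebras are over $\Bbbk$. A coalgebra is pointed if all its simple subcoalgebras are one dimensional, and hereditary if homomorphic images of injective right (equivalently left) comodules are injective. The path coalgebra $\Bbbk Q$ of a quiver $Q$ has basis all paths of $Q$ (including trivial paths = vertices), with $\Delta(p)=\sum_{xy=p}x\otimes y$ ($xy$ = concatenation) and $\varepsilon(p)=1$ if $p$ is trivial and $0$ otherwise. It is known that every pointed hereditary coalgebra $C$ is isomorphic to $\Bbbk Q$ for a unique quiver $Q$, called the Gabriel quiver of $C$. The dual algebra $C^*$ has product $(fg)(x)=\sum f(x_1)g(x_2)$; right $C$-comodules (coaction $m\mapsto \sum m_0\otimes m_1$) are left $C^*$-modules via $f\rightharpoonup m=\sum m_0 f(m_1)$, and left $C$-comodules (coaction $m\mapsto\sum m_{-1}\otimes m_0$) are right $C^*$-modules via $m\leftharpoonup f=\sum f(m_{-1})m_0$; in particular $C$ is a left and a right $C^*$-module. $C$ is left (right) qcF if $C$ embeds as a left (right) $C^*$-module in a free left (right) $C^*$-module. $C$ is left f-qcF if every finite dimensional right $C$-comodule embeds as a left $C^*$-module in a free left $C^*$-module; right f-qcF if every finite dimensional left $C$-comodule embeds as a right $C^*$-module in a free right $C^*$-module. $C$ is coFrobenius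 if $C$ embeds in $C^*$ as a left $C^*$-module (equivalently, as a right $C^*$-module). $C$ is cosemisimple if it is a direct sum of simple subcoalgebras. *)

theory Defs
  imports Main
begin

text \<open>A coalgebra over the field 'k is presented by a basis set B (cbasis) of
an index type 'b, the structure constants of the comultiplication
(comul b (p,q) = coefficient of p \<otimes> q in Delta(b)) and the values of
the counit on the basis.  Elements of C are finitely supported
functions 'b => 'k supported in B; elements of the dual algebra C* are
arbitrary functions on B (extended by 0 outside B).\<close>

record ('b, 'k) coalg =
  cbasis :: "'b set"
  comul  :: "'b \<Rightarrow> 'b \<times> 'b \<Rightarrow> 'k"
  counit :: "'b \<Rightarrow> 'k"

definition csupp :: "('a \<Rightarrow> 'k::zero) \<Rightarrow> 'a set" where
  "csupp f = {x. f x \<noteq> 0}"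

definition celems :: "('b, 'k::zero) coalg \<Rightarrow> ('b \<Rightarrow> 'k) set" where
  "celems C = {x. finite (csupp x) \<and> csupp x \<subseteq> cbasis C}"

definition lin_ext :: "('b \<Rightarrow> 'z \<Rightarrow> 'k::comm_semiring_1) \<Rightarrow> ('b \<Rightarrow> 'k) \<Rightarrow> 'z \<Rightarrow> 'k" where
  "lin_ext \<phi> x = (\<lambda>z. \<Sum>b\<in>csupp x. x b * \<phi> b z)"

definition dual_elems :: "('b, 'k::zero) coalg \<Rightarrow> ('b \<Rightarrow> 'k) set" where
  "dual_elems C = {f. \<forall>b. b \<notin> cbasis C \<longrightarrow> f b = 0}"

text \<open>Product of C*: (fg)(x) = sum f(x1) g(x2).\<close>
definition dual_mult :: "('b, 'k::comm_semiring_1) coalg \<Rightarrow> ('b \<Rightarrow> 'k) \<Rightarrow> ('b \<Rightarrow> 'k) \<Rightarrow> 'b \<Rightarrow> 'k" where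
  "dual_mult C f g = (\<lambda>b. if b \<in> cbasis C
      then \<Sum>pq\<in>csupp (comul C b). comul C b pq * f (fst pq) * g (snd pq) else 0)"

text \<open>Left C*-action on C: f -> b = sum b1 f(b2).\<close>
definition lhit :: "('b, 'k::comm_semiring_1) coalg \<Rightarrow> ('b \<Rightarrow> 'k) \<Rightarrow> 'b \<Rightarrow> 'b \<Rightarrow> 'k" where
  "lhit C f b = (\<lambda>p. \<Sum>q\<in>{q. comul C b (p, q) \<noteq> 0}. comul C b (p, q) * f q)"

text \<open>Right C*-action on C: b <- f = sum f(b1) b2.\<close>
definition rhit :: "('b, 'k::comm_semiring_1) coalg \<Rightarrow> 'b \<Rightarrow> ('b \<Rightarrow> 'k) \<Rightarrow> 'b \<Rightarrow> 'k" where
  "rhit C b f = (\<lambda>q. \<Sum>p\<in>{p. comul C b (p, q) \<noteq> 0}. f p * comul C b (p, q))"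

text \<open>The free C*-module C*^(I): an element u is encoded as u (i,b) = (i-th component)(b).\<close>
definition free_mod :: "('b, 'k::zero) coalg \<Rightarrow> 'i set \<Rightarrow> ('i \<times> 'b \<Rightarrow> 'k) set" where
  "free_mod C I = {u. finite {i. \<exists>b. u (i, b) \<noteq> 0} \<and>
                      (\<forall>i b. u (i, b) \<noteq> 0 \<longrightarrow> i \<in> I \<and> b \<in> cbasis C)}"

definition free_lact :: "('b, 'k::comm_semiring_1) coalg \<Rightarrow> ('b \<Rightarrow> 'k) \<Rightarrow> ('i \<times> 'b \<Rightarrow> 'k) \<Rightarrow> 'i \<times> 'b \<Rightarrow> 'k" where
  "free_lact C f u = (\<lambda>(i, b). dual_mult C f (\<lambda>c. u (i, c)) b)"

definition free_ract :: "('b, 'k::comm_semiring_1) coalg \<Rightarrow> ('i \<times> 'b \<Rightarrow> 'k) \<Rightarrow> ('b \<Rightarrow> 'k) \<Rightarrow> 'i \<times> 'b \<Rightarrow> 'k" where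
  "free_ract C u f = (\<lambda>(i, b). dual_mult C (\<lambda>c. u (i, c)) f b)"

text \<open>Since C has
basis B, the image of any C*-linear map into a free module lies in a free
submodule of rank at most |B| * aleph_0, so index sets I of type ('b * nat) set suffice.\<close>
definition left_qcF :: "('b, 'k::field) coalg \<Rightarrow> bool" where
  "left_qcF C \<longleftrightarrow> (\<exists>(I :: ('b \<times> nat) set) (\<phi> :: 'b \<Rightarrow> ('b \<times> nat) \<times> 'b \<Rightarrow> 'k).
      (\<forall>b\<in>cbasis C. \<phi> b \<in> free_mod C I) \<and>
      (\<forall>x\<in>celems C. lin_ext \<phi> x = (\<lambda>_. 0) \<longrightarrow> x = (\<lambda>_. 0)) \<and>
      (\<forall>f\<in>dual_elems C. \<forall>b\<in>cbasis C. lin_ext \<phi> (lhit C f b) = free_lact C f (\<phi> b)))"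

definition right_qcF :: "('b, 'k::field) coalg \<Rightarrow> bool" where
  "right_qcF C \<longleftrightarrow> (\<exists>(I :: ('b \<times> nat) set) (\<phi> :: 'b \<Rightarrow> ('b \<times> nat) \<times> 'b \<Rightarrow> 'k).
      (\<forall>b\<in>cbasis C. \<phi> b \<in> free_mod C I) \<and>
      (\<forall>x\<in>celems C. lin_ext \<phi> x = (\<lambda>_. 0) \<longrightarrow> x = (\<lambda>_. 0)) \<and>
      (\<forall>f\<in>dual_elems C. \<forall>b\<in>cbasis C. lin_ext \<phi> (rhit C b f) = free_ract C (\<phi> b) f))"

definition coFrobenius :: "('b, 'k::field) coalg \<Rightarrow> bool" where
  "coFrobenius C \<longleftrightarrow> (\<exists>\<phi> :: 'b \<Rightarrow> 'b \<Rightarrow> 'k.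
      (\<forall>b\<in>cbasis C. \<phi> b \<in> dual_elems C) \<and>
      (\<forall>x\<in>celems C. lin_ext \<phi> x = (\<lambda>_. 0) \<longrightarrow> x = (\<lambda>_. 0)) \<and>
      (\<forall>f\<in>dual_elems C. \<forall>b\<in>cbasis C. lin_ext \<phi> (lhit C f b) = dual_mult C f (\<phi> b)))"

text \<open>A finite dimensional right C-comodule with basis m_0..m_(n-1):
rho(m_a) = sum_(m,c) r a m c * m_m (x) c.\<close>
definition right_comod :: "('b, 'k::field) coalg \<Rightarrow> nat \<Rightarrow> (nat \<Rightarrow> nat \<Rightarrow> 'b \<Rightarrow> 'k) \<Rightarrow> bool" where
  "right_comod C n r \<longleftrightarrow>
     (\<forall>a m c. r a m c \<noteq> 0 \<longrightarrow> a < n \<and> m < n \<and> c \<in> cbasis C) \<and>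
     (\<forall>a m. finite {c. r a m c \<noteq> 0}) \<and>
     (\<forall>a<n. \<forall>m<n. \<forall>p q. (\<Sum>m'<n. r a m' q * r m' m p)
                      = (\<Sum>c\<in>{c. r a m c \<noteq> 0}. r a m c * comul C c (p, q))) \<and>
     (\<forall>a<n. \<forall>m<n. (\<Sum>c\<in>{c. r a m c \<noteq> 0}. r a m c * counit C c) = (if a = m then 1 else 0))"

text \<open>A finite dimensional left C-comodule with basis m_0..m_(n-1):
lambda(m_a) = sum_(m,c) r a m c * c (x) m_m.\<close>
definition left_comod :: "('b, 'k::field) coalg \<Rightarrow> nat \<Rightarrow> (nat \<Rightarrow> nat \<Rightarrow> 'b \<Rightarrow> 'k) \<Rightarrow> bool" where
  "left_comod C n r \<longleftrightarrow>
     (\<forall>a m c. r a m c \<noteq> 0 \<longrightarrow> a < n \<and> m < n \<and> c \<in> cbasis C) \<and>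
     (\<forall>a m. finite {c. r a m c \<noteq> 0}) \<and>
     (\<forall>a<n. \<forall>m<n. \<forall>p q. (\<Sum>c\<in>{c. r a m c \<noteq> 0}. r a m c * comul C c (p, q))
                      = (\<Sum>m'<n. r a m' p * r m' m q)) \<and>
     (\<forall>a<n. \<forall>m<n. (\<Sum>c\<in>{c. r a m c \<noteq> 0}. counit C c * r a m c) = (if a = m then 1 else 0))"

text \<open>Coordinates of f -> m_a = sum (m_a)_0 f((m_a)_1) (right comodule), resp.
of m_a <- f = sum f((m_a)_(-1)) (m_a)_0 (left comodule).\<close>
definition comod_act :: "(nat \<Rightarrow> nat \<Rightarrow> 'b \<Rightarrow> 'k::comm_semiring_1) \<Rightarrow> ('b \<Rightarrow> 'k) \<Rightarrow> nat \<Rightarrow> nat \<Rightarrow> 'k" where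
  "comod_act r f a = (\<lambda>m. \<Sum>c\<in>{c. r a m c \<noteq> 0}. r a m c * f c)"

text \<open>Free modules of rank at most aleph_0 suffice for finite dimensional modules.\<close>
definition left_fqcF :: "('b, 'k::field) coalg \<Rightarrow> bool" where
  "left_fqcF C \<longleftrightarrow> (\<forall>n r. right_comod C n r \<longrightarrow>
     (\<exists>(I :: nat set) (\<phi> :: nat \<Rightarrow> nat \<times> 'b \<Rightarrow> 'k).
        (\<forall>a<n. \<phi> a \<in> free_mod C I) \<and>
        (\<forall>x :: nat \<Rightarrow> 'k. (\<forall>m. x m \<noteq> 0 \<longrightarrow> m < n) \<longrightarrow>
              (\<lambda>z. \<Sum>a<n. x a * \<phi> a z) = (\<lambda>_. 0) \<longrightarrow> x = (\<lambda>_. 0)) \<and>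
        (\<forall>f\<in>dual_elems C. \<forall>a<n.
              (\<lambda>z. \<Sum>m<n. comod_act r f a m * \<phi> m z) = free_lact C f (\<phi> a))))"

definition right_fqcF :: "('b, 'k::field) coalg \<Rightarrow> bool" where
  "right_fqcF C \<longleftrightarrow> (\<forall>n r. left_comod C n r \<longrightarrow>
     (\<exists>(I :: nat set) (\<phi> :: nat \<Rightarrow> nat \<times> 'b \<Rightarrow> 'k).
        (\<forall>a<n. \<phi> a \<in> free_mod C I) \<and>
        (\<forall>x :: nat \<Rightarrow> 'k. (\<forall>m. x m \<noteq> 0 \<longrightarrow> m < n) \<longrightarrow>
              (\<lambda>z. \<Sum>a<n. x a * \<phi> a z) = (\<lambda>_. 0) \<longrightarrow> x = (\<lambda>_. 0)) \<and>
        (\<forall>f\<in>dual_elems C. \<forall>a<n.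
              (\<lambda>z. \<Sum>m<n. comod_act r f a m * \<phi> m z) = free_ract C (\<phi> a) f)))"

definition fspan :: "('a \<Rightarrow> 'k::comm_semiring_1) set \<Rightarrow> ('a \<Rightarrow> 'k) set" where
  "fspan S = {x. \<exists>F c. finite F \<and> F \<subseteq> S \<and> x = (\<lambda>z. \<Sum>v\<in>F. c v * v z)}"

definition tensor_sq :: "('a \<Rightarrow> 'k::comm_semiring_1) set \<Rightarrow> ('a \<times> 'a \<Rightarrow> 'k) set" where
  "tensor_sq D = fspan {(\<lambda>(p, q). x p * y q) | x y. x \<in> D \<and> y \<in> D}"

definition subcoalgebra :: "('b, 'k::field) coalg \<Rightarrow> ('b \<Rightarrow> 'k) set \<Rightarrow> bool" where
  "subcoalgebra C D \<longleftrightarrow> D \<subseteq> celems C \<and> fspan D = D \<and>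
      (\<forall>x\<in>D. lin_ext (comul C) x \<in> tensor_sq D)"

definition simple_subcoalgebra :: "('b, 'k::field) coalg \<Rightarrow> ('b \<Rightarrow> 'k) set \<Rightarrow> bool" where
  "simple_subcoalgebra C D \<longleftrightarrow> subcoalgebra C D \<and> D \<noteq> {\<lambda>_. 0} \<and>
      (\<forall>E. subcoalgebra C E \<and> E \<subseteq> D \<longrightarrow> E = {\<lambda>_. 0} \<or> E = D)"

definition cosemisimple :: "('b, 'k::field) coalg \<Rightarrow> bool" where
  "cosemisimple C \<longleftrightarrow> (\<exists>\<D>. (\<forall>D\<in>\<D>. simple_subcoalgebra C D) \<and>
      fspan (\<Union>\<D>) = celems C \<and>
      (\<forall>D\<in>\<D>. D \<inter> fspan (\<Union>(\<D> - {D})) = {\<lambda>_. 0}))"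

text \<open>A quiver Q = (V, E, s, t); a path is (v, [a1,...,an]) with v its start
vertex; n = 0 gives the trivial path at v.\<close>
definition quiver :: "'v set \<Rightarrow> 'e set \<Rightarrow> ('e \<Rightarrow> 'v) \<Rightarrow> ('e \<Rightarrow> 'v) \<Rightarrow> bool" where
  "quiver V E s t \<longleftrightarrow> (\<forall>e\<in>E. s e \<in> V \<and> t e \<in> V)"

definition is_path :: "'v set \<Rightarrow> 'e set \<Rightarrow> ('e \<Rightarrow> 'v) \<Rightarrow> ('e \<Rightarrow> 'v) \<Rightarrow> 'v \<times> 'e list \<Rightarrow> bool" where
  "is_path V E s t p \<longleftrightarrow> fst p \<in> V \<and> set (snd p) \<subseteq> E \<and>
      (snd p \<noteq> [] \<longrightarrow> s (hd (snd p)) = fst p) \<and>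
      (\<forall>i. Suc i < length (snd p) \<longrightarrow> t (snd p ! i) = s (snd p ! Suc i))"

definition path_end :: "('e \<Rightarrow> 'v) \<Rightarrow> 'v \<times> 'e list \<Rightarrow> 'v" where
  "path_end t p = (if snd p = [] then fst p else t (last (snd p)))"

text \<open>Path coalgebra kQ: Delta(p) = sum_(xy = p) x (x) y, eps(p) = [p trivial].\<close>
definition path_coalg :: "'v set \<Rightarrow> 'e set \<Rightarrow> ('e \<Rightarrow> 'v) \<Rightarrow> ('e \<Rightarrow> 'v) \<Rightarrow> ('v \<times> 'e list, 'k::field) coalg" where
  "path_coalg V E s t =
     \<lparr> cbasis = {p. is_path V E s t p},
       comul = (\<lambda>p xy. if is_path V E s t (fst xy) \<and> is_path V E s t (snd xy) \<and>
                           fst (snd xy) = path_end t (fst xy) \<and>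
                           (fst (fst xy), snd (fst xy) @ snd (snd xy)) = p then 1 else 0),
       counit = (\<lambda>p. if is_path V E s t p \<and> snd p = [] then 1 else 0) \<rparr>"

end

theory Submission
  imports Defs
begin


lemma comul_pc: "comul (path_coalg V E s t) y pq = (if is_path V E s t (fst pq) \<and> is_path V E s t (snd pq) \<and>
    fst (snd pq) = path_end t (fst pq) \<and> (fst (fst pq), snd (fst pq) @ snd (snd pq)) = y then 1 else 0)"
  by (simp add: path_coalg_def)

lemma cbasis_pc: "cbasis (path_coalg V E s t) = {p. is_path V E s t p}"
  by (simp add: path_coalg_def)

lemma counit_pc: "counit (path_coalg V E s t) p = (if is_path V E s t p \<and> snd p = [] then 1 else 0)"
  by (simp add: path_coalg_def)

lemma fin_comul: "finite (csupp (comul (path_coalg V E s t) y :: _ \<Rightarrow> 'k::field))"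
proof -
  let ?h = "\<lambda>k. ((fst y, take k (snd y)), (path_end t (fst y, take k (snd y)), drop k (snd y)))"
  have "csupp (comul (path_coalg V E s t) y :: _ \<Rightarrow> 'k) \<subseteq> ?h ` {0..length (snd y)}"
  proof
    fix pq assume "pq \<in> csupp (comul (path_coalg V E s t) y :: _ \<Rightarrow> 'k)"
    then have h: "fst (snd pq) = path_end t (fst pq)" "fst (fst pq) = fst y" "snd (fst pq) @ snd (snd pq) = snd y"
      by (auto simp: csupp_def comul_pc split: if_splits)
    have h2: "snd (fst pq) = take (length (snd (fst pq))) (snd y)" "snd (snd pq) = drop (length (snd (fst pq))) (snd y)"
      using h(3) by (metis append_eq_conv_conj)+
    have "pq = ?h (length (snd (fst pq)))"
      using h h2 by (cases pq; cases "fst pq"; cases "snd pq"; simp)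
    moreover have "length (snd (fst pq)) \<in> {0..length (snd y)}" using h(3) by (auto dest: arg_cong[where f=length])
    ultimately show "pq \<in> ?h ` {0..length (snd y)}" by blast
  qed
  then show ?thesis by (rule finite_subset) simp
qed

lemma sum_single: "finite S \<Longrightarrow> (\<And>x. x \<in> S \<Longrightarrow> x \<noteq> a \<Longrightarrow> h x = 0) \<Longrightarrow> sum h S = (if a \<in> S then h a else 0)"
proof (cases "a \<in> S")
  case True
  assume f: "finite S" and z: "\<And>x. x \<in> S \<Longrightarrow> x \<noteq> a \<Longrightarrow> h x = 0"
  have "sum h S = h a + sum h (S - {a})" using f True by (simp add: sum.remove)
  also have "sum h (S - {a}) = 0" using z by (intro sum.neutral) auto
  finally show ?thesis using True by simp
next
  case False
  assume "finite S" and z: "\<And>x. x \<in> S \<Longrightarrow> x \<noteq> a \<Longrightarrow> h x = 0"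
  then have "sum h S = 0" using False by (intro sum.neutral) metis
  then show ?thesis using False by simp
qed




lemma is_path_triv[simp]: "is_path V E s t (v, []) \<longleftrightarrow> v \<in> V"
  by (simp add: is_path_def)

lemma path_end_triv[simp]: "path_end t (v, []) = v"
  by (simp add: path_end_def)

lemma L1:
  assumes y: "is_path V E s t y"
  shows "dual_mult (path_coalg V E s t) (\<lambda>z. if z = (w,[]) then 1 else 0) g y = (if fst y = w then g y else (0::'k::field))"
proof -
  let ?C = "path_coalg V E s t :: (_, 'k) coalg"
  let ?S = "csupp (comul ?C y)"
  let ?h = "\<lambda>pq. comul ?C y pq * (if fst pq = (w,[]) then 1 else 0) * g (snd pq)"
  have "dual_mult ?C (\<lambda>z. if z = (w,[]) then 1 else 0) g y = sum ?h ?S"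
    using y by (simp add: dual_mult_def cbasis_pc)
  also have "\<dots> = (if ((w,[]),y) \<in> ?S then ?h ((w,[]),y) else 0)"
    by (rule sum_single[OF fin_comul]) (auto simp: csupp_def comul_pc split: if_splits)
  also have "\<dots> = (if fst y = w then g y else 0)"
    using y by (cases y) (auto simp: csupp_def comul_pc is_path_def)
  finally show ?thesis .
qed

lemma L2:
  assumes Q: "quiver V E s t" and e: "e \<in> E" and q: "is_path V E s t q" and fq: "fst q = t e"
  shows "dual_mult (path_coalg V E s t) (\<lambda>z. if z = (s e,[e]) then 1 else 0) g (s e, e # snd q) = (g q :: 'k::field)"
proof -
  let ?C = "path_coalg V E s t :: (_, 'k) coalg"
  let ?y = "(s e, e # snd q)"
  obtain qs where qd: "q = (t e, qs)" using fq by (cases q) auto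
  have pe: "is_path V E s t (s e, [e])" using Q e by (auto simp: is_path_def quiver_def)
  have py: "is_path V E s t ?y"
  proof -
    have "\<forall>i. Suc i < length (snd ?y) \<longrightarrow> t (snd ?y ! i) = s (snd ?y ! Suc i)"
    proof (intro allI impI)
      fix i assume "Suc i < length (snd ?y)"
      then show "t (snd ?y ! i) = s (snd ?y ! Suc i)"
        using q fq by (cases i) (auto simp: is_path_def hd_conv_nth)
    qed
    then show ?thesis using q Q e by (auto simp: is_path_def quiver_def)
  qed
  let ?S = "csupp (comul ?C ?y)"
  let ?h = "\<lambda>pq. comul ?C ?y pq * (if fst pq = (s e,[e]) then 1 else 0) * g (snd pq)"
  have "dual_mult ?C (\<lambda>z. if z = (s e,[e]) then 1 else 0) g ?y = sum ?h ?S"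
    using py by (simp add: dual_mult_def cbasis_pc)
  also have "\<dots> = (if ((s e,[e]),q) \<in> ?S then ?h ((s e,[e]),q) else 0)"
    unfolding qd by (rule sum_single[OF fin_comul]) (auto simp: csupp_def comul_pc path_end_def split: if_splits)
  also have "\<dots> = g q"
  proof -
    show ?thesis using pe q unfolding qd by (auto simp: csupp_def comul_pc path_end_def)
  qed
  finally show ?thesis .
qed

lemma path_end_in:
  assumes Q: "quiver V E s t" and y: "is_path V E s t y"
  shows "path_end t y \<in> V"
  using y Q by (auto simp: path_end_def is_path_def quiver_def dest!: last_in_set)

lemma R1:
  assumes Q: "quiver V E s t" and y: "is_path V E s t y"
  shows "dual_mult (path_coalg V E s t) g (\<lambda>z. if z = (w,[]) then 1 else 0) y = (if path_end t y = w then g y else (0::'k::field))"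
proof -
  let ?C = "path_coalg V E s t :: (_, 'k) coalg"
  let ?S = "csupp (comul ?C y)"
  let ?h = "\<lambda>pq. comul ?C y pq * g (fst pq) * (if snd pq = (w,[]) then 1 else 0)"
  have "dual_mult ?C g (\<lambda>z. if z = (w,[]) then 1 else 0) y = sum ?h ?S"
    using y by (simp add: dual_mult_def cbasis_pc)
  also have "\<dots> = (if (y,(w,[])) \<in> ?S then ?h (y,(w,[])) else 0)"
    by (rule sum_single[OF fin_comul]) (auto simp: csupp_def comul_pc split: if_splits)
  also have "\<dots> = (if path_end t y = w then g y else 0)"
    using y path_end_in[OF Q y] by (cases y) (auto simp: csupp_def comul_pc)
  finally show ?thesis .
qed

lemma R2:
  assumes Q: "quiver V E s t" and e: "e \<in> E" and p: "is_path V E s t p" and fp: "path_end t p = s e"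
  shows "dual_mult (path_coalg V E s t) g (\<lambda>z. if z = (s e,[e]) then 1 else 0) (fst p, snd p @ [e]) = (g p :: 'k::field)"
proof -
  let ?C = "path_coalg V E s t :: (_, 'k) coalg"
  let ?y = "(fst p, snd p @ [e])"
  have pe: "is_path V E s t (s e, [e])" using Q e by (auto simp: is_path_def quiver_def)
  have py: "is_path V E s t ?y"
  proof -
    have "\<forall>i. Suc i < length (snd ?y) \<longrightarrow> t (snd ?y ! i) = s (snd ?y ! Suc i)"
    proof (intro allI impI)
      fix i assume i: "Suc i < length (snd ?y)"
      show "t (snd ?y ! i) = s (snd ?y ! Suc i)"
      proof (cases "Suc i < length (snd p)")
        case True then show ?thesis using p by (auto simp: is_path_def nth_append)
      next
        case False
        then have "Suc i = length (snd p)" using i by simp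
        then have "snd p \<noteq> []" by auto
        have "last (snd p) = snd p ! i" using \<open>Suc i = length (snd p)\<close> \<open>snd p \<noteq> []\<close>
          by (metis diff_Suc_1 last_conv_nth)
        then show ?thesis using fp \<open>Suc i = length (snd p)\<close> \<open>snd p \<noteq> []\<close> by (auto simp: nth_append path_end_def)
      qed
    qed
    moreover have "snd p = [] \<Longrightarrow> s e = fst p" using fp by (simp add: path_end_def)
    ultimately show ?thesis using p Q e by (cases "snd p") (auto simp: is_path_def quiver_def)
  qed
  let ?S = "csupp (comul ?C ?y)"
  let ?h = "\<lambda>pq. comul ?C ?y pq * g (fst pq) * (if snd pq = (s e,[e]) then 1 else 0)"
  have "dual_mult ?C g (\<lambda>z. if z = (s e,[e]) then 1 else 0) ?y = sum ?h ?S"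
    using py by (simp add: dual_mult_def cbasis_pc)
  also have "\<dots> = (if (p,(s e,[e])) \<in> ?S then ?h (p,(s e,[e])) else 0)"
    by (rule sum_single[OF fin_comul]) (auto simp: csupp_def comul_pc split: if_splits)
  also have "\<dots> = g p"
    using pe p fp by (cases p) (auto simp: csupp_def comul_pc)
  finally show ?thesis .
qed




lemma ind_dual: "is_path V E s t P \<Longrightarrow> (\<lambda>z. if z = P then 1 else 0) \<in> dual_elems (path_coalg V E s t :: (_, 'k::field) coalg)"
  by (auto simp: dual_elems_def cbasis_pc)

lemma dual_mult_out: "y \<notin> cbasis C \<Longrightarrow> dual_mult C f g y = 0"
  by (simp add: dual_mult_def)

lemma CL:
  assumes Q: "quiver V E s t" and e: "e \<in> E"
    and H: "\<forall>f\<in>dual_elems (path_coalg V E s t). (\<lambda>y. f (t e,[]) * g y) = dual_mult (path_coalg V E s t) f (g :: _ \<Rightarrow> 'k::field)"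
  shows "g = (\<lambda>_. 0)"
proof
  fix y
  let ?C = "path_coalg V E s t :: (_, 'k) coalg"
  have tV: "t e \<in> V" "s e \<in> V" using Q e by (auto simp: quiver_def)
  have pe: "is_path V E s t (s e, [e])" using Q e by (auto simp: is_path_def quiver_def)
  have H1: "g y = dual_mult ?C (\<lambda>z. if z = (t e,[]) then 1 else 0) g y"
    using fun_cong[OF H[rule_format, OF ind_dual[of V E s t "(t e, [])"]], of y] tV by simp
  show "g y = 0"
  proof (cases "is_path V E s t y")
    case False
    then show ?thesis using H1 dual_mult_out[of y ?C] by (simp add: cbasis_pc)
  next
    case True
    show ?thesis
    proof (cases "fst y = t e")
      case False then show ?thesis using H1 L1[OF True, of "t e" g] by simp
    next
      case ft: True
      have "0 * g (s e, e # snd y) = dual_mult ?C (\<lambda>z. if z = (s e,[e]) then 1 else 0) g (s e, e # snd y)"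
        using fun_cong[OF H[rule_format, OF ind_dual[OF pe]], of "(s e, e # snd y)"] by simp
      then show ?thesis using L2[OF Q e True ft, of g] by simp
    qed
  qed
qed

lemma CR:
  assumes Q: "quiver V E s t" and e: "e \<in> E"
    and H: "\<forall>f\<in>dual_elems (path_coalg V E s t). (\<lambda>y. f (s e,[]) * g y) = dual_mult (path_coalg V E s t) g (f :: _ \<Rightarrow> 'k::field)"
  shows "g = (\<lambda>_. 0)"
proof
  fix y
  let ?C = "path_coalg V E s t :: (_, 'k) coalg"
  have tV: "t e \<in> V" "s e \<in> V" using Q e by (auto simp: quiver_def)
  have pe: "is_path V E s t (s e, [e])" using Q e by (auto simp: is_path_def quiver_def)
  have H1: "g y = dual_mult ?C g (\<lambda>z. if z = (s e,[]) then 1 else 0) y"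
    using fun_cong[OF H[rule_format, OF ind_dual[of V E s t "(s e, [])"]], of y] tV by simp
  show "g y = 0"
  proof (cases "is_path V E s t y")
    case False
    then show ?thesis using H1 dual_mult_out[of y ?C] by (simp add: cbasis_pc)
  next
    case True
    show ?thesis
    proof (cases "path_end t y = s e")
      case False then show ?thesis using H1 R1[OF Q True, of g "s e"] by simp
    next
      case ft: True
      have "0 * g (fst y, snd y @ [e]) = dual_mult ?C g (\<lambda>z. if z = (s e,[e]) then 1 else 0) (fst y, snd y @ [e])"
        using fun_cong[OF H[rule_format, OF ind_dual[OF pe]], of "(fst y, snd y @ [e])"] by simp
      then show ?thesis using R2[OF Q e True ft, of g] by simp
    qed
  qed
qed




lemma comul_triv: "v \<in> V \<Longrightarrow> comul (path_coalg V E s t) (v,[]) pq = (if pq = ((v,[]),(v,[])) then 1 else 0)"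
  by (cases pq) (auto simp: comul_pc path_end_def)

definition trivr :: "'v \<Rightarrow> nat \<Rightarrow> nat \<Rightarrow> 'v \<times> 'e list \<Rightarrow> 'k::field" where
  "trivr v a m c = (if a = 0 \<and> m = 0 \<and> c = (v,[]) then 1 else 0)"

lemma trivr_set: "{c. trivr v a m c \<noteq> (0::'k::field)} = (if a = 0 \<and> m = 0 then {(v,[])} else {})"
  by (auto simp: trivr_def split: if_splits)

lemma trivr_right: "v \<in> V \<Longrightarrow> right_comod (path_coalg V E s t) 1 (trivr v :: _ \<Rightarrow> _ \<Rightarrow> _ \<Rightarrow> 'k::field)"
  unfolding right_comod_def
  by (auto simp: trivr_set comul_triv counit_pc cbasis_pc) (auto simp: trivr_def split: if_splits)

lemma trivr_left: "v \<in> V \<Longrightarrow> left_comod (path_coalg V E s t) 1 (trivr v :: _ \<Rightarrow> _ \<Rightarrow> _ \<Rightarrow> 'k::field)"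
  unfolding left_comod_def
  by (auto simp: trivr_set comul_triv counit_pc cbasis_pc) (auto simp: trivr_def split: if_splits)

lemma comod_act_trivr: "comod_act (trivr v) f 0 0 = f (v, [])"
  by (simp add: comod_act_def trivr_set) (simp add: trivr_def)

lemma neg_lfqcF:
  fixes V :: "'v set" and E :: "'e set"
  assumes Q: "quiver V E s t" and e: "e \<in> E"
  shows "\<not> left_fqcF (path_coalg V E s t :: (_, 'k::field) coalg)"
proof
  let ?C = "path_coalg V E s t :: (_, 'k) coalg"
  assume "left_fqcF ?C"
  have tV: "t e \<in> V" using Q e by (auto simp: quiver_def)
  from \<open>left_fqcF ?C\<close>[unfolded left_fqcF_def, rule_format, OF trivr_right[OF tV]]
  obtain I :: "nat set" and \<phi> :: "nat \<Rightarrow> nat \<times> _ \<Rightarrow> 'k" where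
    h2: "\<forall>x :: nat \<Rightarrow> 'k. (\<forall>m. x m \<noteq> 0 \<longrightarrow> m < 1) \<longrightarrow>
              (\<lambda>z. \<Sum>a<1. x a * \<phi> a z) = (\<lambda>_. 0) \<longrightarrow> x = (\<lambda>_. 0)" and
    h3: "\<forall>f\<in>dual_elems ?C. \<forall>a<1.
              (\<lambda>z. \<Sum>m<1. comod_act (trivr (t e)) f a m * \<phi> m z) = free_lact ?C f (\<phi> a)"
    by (elim exE conjE) (rule that)
  have "\<phi> 0 = (\<lambda>_. 0)"
  proof
    fix z :: "nat \<times> 'v \<times> 'e list"
    show "\<phi> 0 z = 0"
    proof -
    obtain i y where Pair: "z = (i, y)" by (cases z) blast
    have "(\<lambda>y. \<phi> 0 (i, y)) = (\<lambda>_. 0)"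
    proof (rule CL[OF Q e], intro ballI)
      fix f assume f: "f \<in> dual_elems ?C"
      show "(\<lambda>y. f (t e, []) * \<phi> 0 (i, y)) = dual_mult ?C f (\<lambda>y. \<phi> 0 (i, y))"
      proof
        fix y
        show "f (t e, []) * \<phi> 0 (i, y) = dual_mult ?C f (\<lambda>y. \<phi> 0 (i, y)) y"
        proof -
          have ca: "comod_act (trivr (t e)) f 0 0 = f (t e, [])" by (rule comod_act_trivr)
          have eq: "(\<Sum>m<1. comod_act (trivr (t e)) f 0 m * \<phi> m (i,y)) = free_lact ?C f (\<phi> 0) (i,y)"
            using fun_cong[OF h3[rule_format, OF f, of 0], of "(i,y)"] by (simp only:)
          have "(\<Sum>m<1. comod_act (trivr (t e)) f 0 m * \<phi> m (i,y)) = f (t e, []) * \<phi> 0 (i, y)"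
            using ca by simp
          moreover have "free_lact ?C f (\<phi> 0) (i,y) = dual_mult ?C f (\<lambda>y. \<phi> 0 (i, y)) y"
            by (simp only: free_lact_def case_prod_conv)
          ultimately show ?thesis using eq ca by simp
        qed
      qed
    qed
    then show ?thesis unfolding Pair by (rule fun_cong)
  qed
  qed
  then have z1: "(\<lambda>z. \<Sum>a<1. (if a = 0 then 1 else 0 :: 'k) * \<phi> a z) = (\<lambda>_. 0)" by simp
  have x0: "\<forall>m. (if m = 0 then 1 else 0 :: 'k) \<noteq> 0 \<longrightarrow> m < (1::nat)" by simp
  have "(\<lambda>m::nat. if m = 0 then 1 else 0 :: 'k) = (\<lambda>_. 0)"
    using h2[THEN spec[where x="\<lambda>m. if m = 0 then 1 else 0"], THEN mp, OF x0, THEN mp, OF z1] .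
  from fun_cong[OF this, of 0] show False by simp
qed


lemma neg_rfqcF:
  fixes V :: "'v set" and E :: "'e set"
  assumes Q: "quiver V E s t" and e: "e \<in> E"
  shows "\<not> right_fqcF (path_coalg V E s t :: (_, 'k::field) coalg)"
proof
  let ?C = "path_coalg V E s t :: (_, 'k) coalg"
  assume "right_fqcF ?C"
  have tV: "s e \<in> V" using Q e by (auto simp: quiver_def)
  from \<open>right_fqcF ?C\<close>[unfolded right_fqcF_def, rule_format, OF trivr_left[OF tV]]
  obtain I :: "nat set" and \<phi> :: "nat \<Rightarrow> nat \<times> _ \<Rightarrow> 'k" where
    h2: "\<forall>x :: nat \<Rightarrow> 'k. (\<forall>m. x m \<noteq> 0 \<longrightarrow> m < 1) \<longrightarrow>
              (\<lambda>z. \<Sum>a<1. x a * \<phi> a z) = (\<lambda>_. 0) \<longrightarrow> x = (\<lambda>_. 0)" and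
    h3: "\<forall>f\<in>dual_elems ?C. \<forall>a<1.
              (\<lambda>z. \<Sum>m<1. comod_act (trivr (s e)) f a m * \<phi> m z) = free_ract ?C (\<phi> a) f"
    by (elim exE conjE) (rule that)
  have "\<phi> 0 = (\<lambda>_. 0)"
  proof
    fix z :: "nat \<times> 'v \<times> 'e list"
    show "\<phi> 0 z = 0"
    proof -
    obtain i y where Pair: "z = (i, y)" by (cases z) blast
    have "(\<lambda>y. \<phi> 0 (i, y)) = (\<lambda>_. 0)"
    proof (rule CR[OF Q e], intro ballI)
      fix f assume f: "f \<in> dual_elems ?C"
      show "(\<lambda>y. f (s e, []) * \<phi> 0 (i, y)) = dual_mult ?C (\<lambda>y. \<phi> 0 (i, y)) f"
      proof
        fix y
        show "f (s e, []) * \<phi> 0 (i, y) = dual_mult ?C (\<lambda>y. \<phi> 0 (i, y)) f y"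
        proof -
          have ca: "comod_act (trivr (s e)) f 0 0 = f (s e, [])" by (rule comod_act_trivr)
          have eq: "(\<Sum>m<1. comod_act (trivr (s e)) f 0 m * \<phi> m (i,y)) = free_ract ?C (\<phi> 0) f (i,y)"
            using fun_cong[OF h3[rule_format, OF f, of 0], of "(i,y)"] by (simp only:)
          have "(\<Sum>m<1. comod_act (trivr (s e)) f 0 m * \<phi> m (i,y)) = f (s e, []) * \<phi> 0 (i, y)"
            using ca by simp
          moreover have "free_ract ?C (\<phi> 0) f (i,y) = dual_mult ?C (\<lambda>y. \<phi> 0 (i, y)) f y"
            by (simp only: free_ract_def case_prod_conv)
          ultimately show ?thesis using eq ca by simp
        qed
      qed
    qed
    then show ?thesis unfolding Pair by (rule fun_cong)
  qed
  qed
  then have z1: "(\<lambda>z. \<Sum>a<1. (if a = 0 then 1 else 0 :: 'k) * \<phi> a z) = (\<lambda>_. 0)" by simp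
  have x0: "\<forall>m. (if m = 0 then 1 else 0 :: 'k) \<noteq> 0 \<longrightarrow> m < (1::nat)" by simp
  have "(\<lambda>m::nat. if m = 0 then 1 else 0 :: 'k) = (\<lambda>_. 0)"
    using h2[THEN spec[where x="\<lambda>m. if m = 0 then 1 else 0"], THEN mp, OF x0, THEN mp, OF z1] .
  from fun_cong[OF this, of 0] show False by simp
qed




lemma from_left:
  fixes V :: "'v set" and E :: "'e set" and u :: "'i \<times> 'v \<times> 'e list \<Rightarrow> 'k::field"
  assumes Q: "quiver V E s t" and e: "e \<in> E"
    and H: "\<forall>f\<in>dual_elems (path_coalg V E s t). (\<lambda>z. f (t e,[]) * u z) = free_lact (path_coalg V E s t) f u"
  shows "u = (\<lambda>_. 0)"
proof
  fix z :: "'i \<times> 'v \<times> 'e list"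
  obtain i y where Pair: "z = (i, y)" by (cases z) blast
  have "(\<lambda>y. u (i, y)) = (\<lambda>_. 0)"
  proof (rule CL[OF Q e], intro ballI ext)
    fix f y assume f: "f \<in> dual_elems (path_coalg V E s t :: (_, 'k) coalg)"
    show "f (t e, []) * u (i, y) = dual_mult (path_coalg V E s t) f (\<lambda>y. u (i, y)) y"
      using fun_cong[OF H[rule_format, OF f], of "(i,y)"] by (simp add: free_lact_def)
  qed
  then show "u z = 0" unfolding Pair by (rule fun_cong)
qed

lemma from_right:
  fixes V :: "'v set" and E :: "'e set" and u :: "'i \<times> 'v \<times> 'e list \<Rightarrow> 'k::field"
  assumes Q: "quiver V E s t" and e: "e \<in> E"
    and H: "\<forall>f\<in>dual_elems (path_coalg V E s t). (\<lambda>z. f (s e,[]) * u z) = free_ract (path_coalg V E s t) u f"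
  shows "u = (\<lambda>_. 0)"
proof
  fix z :: "'i \<times> 'v \<times> 'e list"
  obtain i y where Pair: "z = (i, y)" by (cases z) blast
  have "(\<lambda>y. u (i, y)) = (\<lambda>_. 0)"
  proof (rule CR[OF Q e], intro ballI ext)
    fix f y assume f: "f \<in> dual_elems (path_coalg V E s t :: (_, 'k) coalg)"
    show "f (s e, []) * u (i, y) = dual_mult (path_coalg V E s t) (\<lambda>y. u (i, y)) f y"
      using fun_cong[OF H[rule_format, OF f], of "(i,y)"] by (simp add: free_ract_def)
  qed
  then show "u z = 0" unfolding Pair by (rule fun_cong)
qed

lemma lhit_triv: "v \<in> V \<Longrightarrow> lhit (path_coalg V E s t) f (v,[]) = (\<lambda>p. if p = (v,[]) then f (v,[]) else (0::'k::field))"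
proof
  fix p assume v: "v \<in> V"
  have "{q. comul (path_coalg V E s t) (v,[]) (p, q) \<noteq> (0::'k)} = (if p = (v,[]) then {(v,[])} else {})"
    using v by (auto simp: comul_triv)
  then show "lhit (path_coalg V E s t) f (v,[]) p = (if p = (v,[]) then f (v,[]) else 0)"
    using v by (simp add: lhit_def comul_triv)
qed

lemma rhit_triv: "v \<in> V \<Longrightarrow> rhit (path_coalg V E s t) (v,[]) f = (\<lambda>p. if p = (v,[]) then f (v,[]) else (0::'k::field))"
proof
  fix p assume v: "v \<in> V"
  have "{q. comul (path_coalg V E s t) (v,[]) (q, p) \<noteq> (0::'k)} = (if p = (v,[]) then {(v,[])} else {})"
    using v by (auto simp: comul_triv)
  then show "rhit (path_coalg V E s t) (v,[]) f p = (if p = (v,[]) then f (v,[]) else 0)"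
    using v by (simp add: rhit_def comul_triv)
qed

lemma lin_ext_ind: "lin_ext \<phi> (\<lambda>p. if p = b then k else 0) = (\<lambda>z. k * \<phi> b z)"
proof (cases "k = 0")
  case True
  have "csupp (\<lambda>p. if p = b then k else 0) = {}" using True by (simp add: csupp_def)
  then show ?thesis using True by (simp add: lin_ext_def)
next
  case False
  have "csupp (\<lambda>p. if p = b then k else 0) = {b}" using False by (auto simp: csupp_def)
  then show ?thesis by (simp add: lin_ext_def)
qed

lemma ind_celems: "is_path V E s t b \<Longrightarrow> (\<lambda>p. if p = b then 1 else 0) \<in> celems (path_coalg V E s t :: (_, 'k::field) coalg)"
proof -
  assume b: "is_path V E s t b"
  have "csupp (\<lambda>p. if p = b then 1::'k else 0) = {b}" by (auto simp: csupp_def)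
  then show ?thesis using b by (simp add: celems_def cbasis_pc)
qed

lemma ind_ne: "(\<lambda>p. if p = b then 1::'k::field else 0) \<noteq> (\<lambda>_. 0)"
proof
  assume "(\<lambda>p. if p = b then 1::'k::field else 0) = (\<lambda>_. 0)"
  from fun_cong[OF this, of b] show False by simp
qed

lemma neg_lqcF:
  fixes V :: "'v set" and E :: "'e set"
  assumes Q: "quiver V E s t" and e: "e \<in> E"
  shows "\<not> left_qcF (path_coalg V E s t :: (_, 'k::field) coalg)"
proof
  let ?C = "path_coalg V E s t :: (_, 'k) coalg"
  let ?b = "(t e, []) :: 'v \<times> 'e list"
  assume "left_qcF ?C"
  then obtain I :: "(('v \<times> 'e list) \<times> nat) set" and \<phi> :: "'v \<times> 'e list \<Rightarrow> (('v \<times> 'e list) \<times> nat) \<times> 'v \<times> 'e list \<Rightarrow> 'k" where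
    h1: "\<forall>b\<in>cbasis ?C. \<phi> b \<in> free_mod ?C I" and
    h2: "\<forall>x\<in>celems ?C. lin_ext \<phi> x = (\<lambda>_. 0) \<longrightarrow> x = (\<lambda>_. 0)" and
    h3: "\<forall>f\<in>dual_elems ?C. \<forall>b\<in>cbasis ?C. lin_ext \<phi> (lhit ?C f b) = free_lact ?C f (\<phi> b)"
    unfolding left_qcF_def by (elim exE conjE) (rule that; assumption)
  have tV: "t e \<in> V" using Q e by (auto simp: quiver_def)
  have "\<phi> ?b = (\<lambda>_. 0)"
  proof (rule from_left[OF Q e], intro ballI)
    fix f assume f: "f \<in> dual_elems ?C"
    show "(\<lambda>z. f (t e, []) * \<phi> ?b z) = free_lact ?C f (\<phi> ?b)"
    proof -
      have bB: "?b \<in> cbasis ?C" using tV by (simp add: cbasis_pc)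
      have "lin_ext \<phi> (lhit ?C f ?b) = free_lact ?C f (\<phi> ?b)" using h3 f bB by blast
      moreover have "lhit ?C f ?b = (\<lambda>p. if p = ?b then f ?b else 0)" by (rule lhit_triv[OF tV])
      moreover have "lin_ext \<phi> (\<lambda>p. if p = ?b then f ?b else 0) = (\<lambda>z. f ?b * \<phi> ?b z)" by (rule lin_ext_ind)
      ultimately show ?thesis by simp
    qed
  qed
  then have "(\<lambda>p. if p = ?b then 1::'k else 0) = (\<lambda>_. 0)"
  proof -
    have "lin_ext \<phi> (\<lambda>p. if p = ?b then 1::'k else 0) = (\<lambda>z. 1 * \<phi> ?b z)" by (rule lin_ext_ind)
    then have "lin_ext \<phi> (\<lambda>p. if p = ?b then 1::'k else 0) = (\<lambda>_. 0)" using \<open>\<phi> ?b = (\<lambda>_. 0)\<close> by simp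
    moreover have "(\<lambda>p. if p = ?b then 1::'k else 0) \<in> celems ?C" using ind_celems[of V E s t ?b] tV by simp
    ultimately show ?thesis using h2 by blast
  qed
  then show False by (rule ind_ne[THEN notE])
qed

lemma neg_rqcF:
  fixes V :: "'v set" and E :: "'e set"
  assumes Q: "quiver V E s t" and e: "e \<in> E"
  shows "\<not> right_qcF (path_coalg V E s t :: (_, 'k::field) coalg)"
proof
  let ?C = "path_coalg V E s t :: (_, 'k) coalg"
  let ?b = "(s e, []) :: 'v \<times> 'e list"
  assume "right_qcF ?C"
  then obtain I :: "(('v \<times> 'e list) \<times> nat) set" and \<phi> :: "'v \<times> 'e list \<Rightarrow> (('v \<times> 'e list) \<times> nat) \<times> 'v \<times> 'e list \<Rightarrow> 'k" where
    h1: "\<forall>b\<in>cbasis ?C. \<phi> b \<in> free_mod ?C I" and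
    h2: "\<forall>x\<in>celems ?C. lin_ext \<phi> x = (\<lambda>_. 0) \<longrightarrow> x = (\<lambda>_. 0)" and
    h3: "\<forall>f\<in>dual_elems ?C. \<forall>b\<in>cbasis ?C. lin_ext \<phi> (rhit ?C b f) = free_ract ?C (\<phi> b) f"
    unfolding right_qcF_def by (elim exE conjE) (rule that; assumption)
  have tV: "s e \<in> V" using Q e by (auto simp: quiver_def)
  have "\<phi> ?b = (\<lambda>_. 0)"
  proof (rule from_right[OF Q e], intro ballI)
    fix f assume f: "f \<in> dual_elems ?C"
    show "(\<lambda>z. f (s e, []) * \<phi> ?b z) = free_ract ?C (\<phi> ?b) f"
    proof -
      have bB: "?b \<in> cbasis ?C" using tV by (simp add: cbasis_pc)
      have "lin_ext \<phi> (rhit ?C ?b f) = free_ract ?C (\<phi> ?b) f" using h3 f bB by blast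
      moreover have "rhit ?C ?b f = (\<lambda>p. if p = ?b then f ?b else 0)" by (rule rhit_triv[OF tV])
      moreover have "lin_ext \<phi> (\<lambda>p. if p = ?b then f ?b else 0) = (\<lambda>z. f ?b * \<phi> ?b z)" by (rule lin_ext_ind)
      ultimately show ?thesis by simp
    qed
  qed
  then have "(\<lambda>p. if p = ?b then 1::'k else 0) = (\<lambda>_. 0)"
  proof -
    have "lin_ext \<phi> (\<lambda>p. if p = ?b then 1::'k else 0) = (\<lambda>z. 1 * \<phi> ?b z)" by (rule lin_ext_ind)
    then have "lin_ext \<phi> (\<lambda>p. if p = ?b then 1::'k else 0) = (\<lambda>_. 0)" using \<open>\<phi> ?b = (\<lambda>_. 0)\<close> by simp
    moreover have "(\<lambda>p. if p = ?b then 1::'k else 0) \<in> celems ?C" using ind_celems[of V E s t ?b] tV by simp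
    ultimately show ?thesis using h2 by blast
  qed
  then show False by (rule ind_ne[THEN notE])
qed

lemma neg_coFrob:
  fixes V :: "'v set" and E :: "'e set"
  assumes Q: "quiver V E s t" and e: "e \<in> E"
  shows "\<not> coFrobenius (path_coalg V E s t :: (_, 'k::field) coalg)"
proof
  let ?C = "path_coalg V E s t :: (_, 'k) coalg"
  let ?b = "(t e, []) :: 'v \<times> 'e list"
  assume "coFrobenius ?C"
  then obtain \<phi> :: "'v \<times> 'e list \<Rightarrow> 'v \<times> 'e list \<Rightarrow> 'k" where
    h2: "\<forall>x\<in>celems ?C. lin_ext \<phi> x = (\<lambda>_. 0) \<longrightarrow> x = (\<lambda>_. 0)" and
    h3: "\<forall>f\<in>dual_elems ?C. \<forall>b\<in>cbasis ?C. lin_ext \<phi> (lhit ?C f b) = dual_mult ?C f (\<phi> b)"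
    unfolding coFrobenius_def by (elim exE conjE) (rule that; assumption)
  have tV: "t e \<in> V" using Q e by (auto simp: quiver_def)
  have "\<phi> ?b = (\<lambda>_. 0)"
  proof (rule CL[OF Q e], intro ballI)
    fix f assume f: "f \<in> dual_elems ?C"
    show "(\<lambda>z. f (t e, []) * \<phi> ?b z) = dual_mult ?C f (\<phi> ?b)"
    proof -
      have bB: "?b \<in> cbasis ?C" using tV by (simp add: cbasis_pc)
      have "lin_ext \<phi> (lhit ?C f ?b) = dual_mult ?C f (\<phi> ?b)" using h3 f bB by blast
      moreover have "lhit ?C f ?b = (\<lambda>p. if p = ?b then f ?b else 0)" by (rule lhit_triv[OF tV])
      moreover have "lin_ext \<phi> (\<lambda>p. if p = ?b then f ?b else 0) = (\<lambda>z. f ?b * \<phi> ?b z)" by (rule lin_ext_ind)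
      ultimately show ?thesis by simp
    qed
  qed
  then have "(\<lambda>p. if p = ?b then 1::'k else 0) = (\<lambda>_. 0)"
  proof -
    have "lin_ext \<phi> (\<lambda>p. if p = ?b then 1::'k else 0) = (\<lambda>z. 1 * \<phi> ?b z)" by (rule lin_ext_ind)
    then have "lin_ext \<phi> (\<lambda>p. if p = ?b then 1::'k else 0) = (\<lambda>_. 0)" using \<open>\<phi> ?b = (\<lambda>_. 0)\<close> by simp
    moreover have "(\<lambda>p. if p = ?b then 1::'k else 0) \<in> celems ?C" using ind_celems[of V E s t ?b] tV by simp
    ultimately show ?thesis using h2 by blast
  qed
  then show False by (rule ind_ne[THEN notE])
qed




definition line :: "'v \<Rightarrow> ('v \<times> 'e list \<Rightarrow> 'k::field) set" where
  "line v = {x. \<exists>c. x = (\<lambda>a. c * (if a = (v,[]) then 1 else 0))}"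

lemma fspan_lin0:
  assumes fin: "finite F" and h: "\<forall>w\<in>F. h w \<in> D"
  shows "(\<lambda>a. \<Sum>w\<in>F. d w * h w a) \<in> fspan D"
proof -
  let ?c = "\<lambda>u. \<Sum>w\<in>{w\<in>F. h w = u}. d w"
  have "(\<lambda>a. \<Sum>w\<in>F. d w * h w a) = (\<lambda>a. \<Sum>u\<in>h ` F. ?c u * u a)"
  proof
    fix a
    have "(\<Sum>w\<in>F. d w * h w a) = (\<Sum>u\<in>h ` F. \<Sum>w\<in>{w\<in>F. h w = u}. d w * h w a)"
      using fin by (rule sum.image_gen)
    also have "\<dots> = (\<Sum>u\<in>h ` F. ?c u * u a)"
    proof (rule sum.cong[OF refl])
      fix u assume "u \<in> h ` F"
      have "(\<Sum>w\<in>{w\<in>F. h w = u}. d w * h w a) = (\<Sum>w\<in>{w\<in>F. h w = u}. d w * u a)"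
        by (rule sum.cong) auto
      also have "\<dots> = ?c u * u a" by (simp add: sum_distrib_right)
      finally show "(\<Sum>w\<in>{w\<in>F. h w = u}. d w * h w a) = ?c u * u a" .
    qed
    finally show "(\<Sum>w\<in>F. d w * h w a) = (\<Sum>u\<in>h ` F. ?c u * u a)" .
  qed
  moreover have "(\<lambda>a. \<Sum>u\<in>h ` F. ?c u * u a) \<in> fspan D"
    unfolding fspan_def
    apply (rule CollectI, rule exI[of _ "h ` F"], rule exI[of _ ?c])
    using fin h by auto
  ultimately show ?thesis by simp
qed

lemma fspan_lin:
  assumes fin: "finite F" and h: "\<forall>w\<in>F. h w \<in> D" and D: "fspan D = D"
  shows "(\<lambda>a. \<Sum>w\<in>F. d w * h w a) \<in> D"
  using fspan_lin0[OF fin h, of d] D by simp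

lemma zero_in: "fspan D = D \<Longrightarrow> (\<lambda>_. 0) \<in> D"
  using fspan_lin[of "{}" "\<lambda>x. x" D "\<lambda>_. 0"] by simp

lemma tensor_slice:
  assumes D: "fspan D = D" and T: "T \<in> tensor_sq D"
  shows "(\<lambda>a. T (a, P)) \<in> D"
proof -
  obtain F c where F: "finite F" "F \<subseteq> {(\<lambda>(p, q). x p * y q) | x y. x \<in> D \<and> y \<in> D}"
    and Te: "T = (\<lambda>z. \<Sum>v\<in>F. c v * v z)"
    using T unfolding tensor_sq_def fspan_def by blast
  have "\<forall>w\<in>F. \<exists>xy. fst xy \<in> D \<and> snd xy \<in> D \<and> w = (\<lambda>(p, q). fst xy p * snd xy q)"
    using F(2) by force
  then obtain XY where XY: "\<forall>w\<in>F. fst (XY w) \<in> D \<and> snd (XY w) \<in> D \<and> w = (\<lambda>(p, q). fst (XY w) p * snd (XY w) q)"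
    by metis
  have "(\<lambda>a. T (a, P)) = (\<lambda>a. \<Sum>w\<in>F. (c w * snd (XY w) P) * fst (XY w) a)"
  proof
    fix a
    show "T (a, P) = (\<Sum>w\<in>F. (c w * snd (XY w) P) * fst (XY w) a)"
      unfolding Te
    proof (rule sum.cong[OF refl])
      fix w assume "w \<in> F"
      then have "w (a, P) = fst (XY w) a * snd (XY w) P" using XY by (metis case_prod_conv)
      then show "c w * w (a, P) = (c w * snd (XY w) P) * fst (XY w) a" by (simp add: ac_simps)
    qed
  qed
  also have "\<dots> \<in> D"
    by (rule fspan_lin[OF F(1) _ D, of "\<lambda>w. fst (XY w)" "\<lambda>w. c w * snd (XY w) P"]) (use XY in blast)
  finally show ?thesis .
qed

lemma line_elem: "x \<in> line v \<Longrightarrow> x = (\<lambda>a. x (v,[]) * (if a = (v,[]) then 1 else 0))"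
  by (auto simp: line_def)

lemma line_comb:
  fixes F :: "('v \<times> 'e list \<Rightarrow> 'k::field) set"
  assumes F: "F \<subseteq> line v"
  shows "(\<lambda>z. \<Sum>u\<in>F. c u * u z) \<in> line v"
proof -
  have "(\<lambda>z. \<Sum>u\<in>F. c u * u z) = (\<lambda>a. (\<Sum>u\<in>F. c u * u (v,[])) * (if a = (v,[]) then 1 else 0))"
  proof
    fix a
    have "(\<Sum>u\<in>F. c u * u a) = (\<Sum>u\<in>F. c u * (u (v,[]) * (if a = (v,[]) then 1 else 0)))"
    proof (rule sum.cong[OF refl])
      fix u assume "u \<in> F"
      then have "u = (\<lambda>a. u (v,[]) * (if a = (v,[]) then 1 else 0))" using F by (intro line_elem) blast
      then have "u a = u (v,[]) * (if a = (v,[]) then 1 else 0)" by (rule fun_cong)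
      then show "c u * u a = c u * (u (v,[]) * (if a = (v,[]) then 1 else 0))" by (simp only:)
    qed
    also have "\<dots> = (\<Sum>u\<in>F. c u * u (v,[])) * (if a = (v,[]) then 1 else 0)"
      by (simp add: sum_distrib_right mult.assoc)
    finally show "(\<Sum>u\<in>F. c u * u a) = (\<Sum>u\<in>F. c u * u (v,[])) * (if a = (v,[]) then 1 else 0)" .
  qed
  then show ?thesis unfolding line_def mem_Collect_eq by (rule exI[where x="\<Sum>u\<in>F. c u * u (v,[])"])
qed

lemma line_fspan: "fspan (line v :: ('v \<times> 'e list \<Rightarrow> 'k::field) set) = line v"
proof
  show "fspan (line v) \<subseteq> (line v :: ('v \<times> 'e list \<Rightarrow> 'k::field) set)"
    unfolding fspan_def by (auto intro!: line_comb)
next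
  show "line v \<subseteq> fspan (line v :: ('v \<times> 'e list \<Rightarrow> 'k::field) set)"
  proof
    fix x assume x: "x \<in> (line v :: ('v \<times> 'e list \<Rightarrow> 'k) set)"
    show "x \<in> fspan (line v)" unfolding fspan_def
      apply (rule CollectI, rule exI[of _ "{x}"], rule exI[of _ "\<lambda>_. 1"])
      using x by simp
  qed
qed

lemma subcoalg_line:
  fixes V :: "'v set" and E :: "'e set"
  assumes v: "v \<in> V"
  shows "subcoalgebra (path_coalg V E s t) (line v :: ('v \<times> 'e list \<Rightarrow> 'k::field) set)"
  unfolding subcoalgebra_def
proof (intro conjI ballI)
  let ?i = "\<lambda>a. if a = (v,[]) then 1::'k else 0"
  show "line v \<subseteq> celems (path_coalg V E s t :: ('v \<times> 'e list, 'k) coalg)"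
  proof
    fix x assume "x \<in> (line v :: ('v \<times> 'e list \<Rightarrow> 'k) set)"
    then have "csupp x \<subseteq> {(v,[])}" by (auto simp: line_def csupp_def split: if_splits)
    then show "x \<in> celems (path_coalg V E s t)"
      using v by (auto simp: celems_def cbasis_pc intro: finite_subset)
  qed
  show "fspan (line v) = (line v :: ('v \<times> 'e list \<Rightarrow> 'k) set)" by (rule line_fspan)
  fix x assume "x \<in> (line v :: ('v \<times> 'e list \<Rightarrow> 'k) set)"
  then obtain k where xe: "x = (\<lambda>a. k * ?i a)" by (auto simp: line_def)
  have "lin_ext (comul (path_coalg V E s t)) x = (\<lambda>pq. k * comul (path_coalg V E s t) (v,[]) pq)"
    unfolding xe using lin_ext_ind[of "comul (path_coalg V E s t)" "(v,[])" k]
    by (simp add: if_distrib cong: if_cong)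
  also have "\<dots> = (\<lambda>z. \<Sum>u\<in>{\<lambda>(p, q). (\<lambda>a. k * ?i a) p * ?i q}. (\<lambda>_. 1) u * u z)"
    using v by (auto simp: comul_triv)
  also have "\<dots> \<in> tensor_sq (line v)"
  proof -
    have "(\<lambda>a. k * ?i a) \<in> line v" unfolding line_def by auto
    moreover have "?i \<in> line v" unfolding line_def mem_Collect_eq by (rule exI[where x=1]) simp
    ultimately have AB: "(\<lambda>a. k * ?i a) \<in> line v" "?i \<in> line v" by auto
    have mem: "(\<lambda>(p, q). (\<lambda>a. k * ?i a) p * ?i q) \<in> {\<lambda>(p, q). x p * y q |x y. x \<in> line v \<and> y \<in> line v}"
      unfolding mem_Collect_eq by (rule exI[of _ "\<lambda>a. k * ?i a"], rule exI[of _ ?i]) (use AB in simp)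
    show ?thesis unfolding tensor_sq_def fspan_def
      apply (rule CollectI, rule exI[of _ "{\<lambda>(p, q). (\<lambda>a. k * ?i a) p * ?i q}"], rule exI[of _ "\<lambda>_. 1"])
      using mem by (simp only: finite.emptyI finite_insert insert_subset empty_subsetI simp_thms)
  qed
  finally show "lin_ext (comul (path_coalg V E s t)) x \<in> tensor_sq (line v)" .
qed




lemma simple_vanish:
  fixes V :: "'v set" and E :: "'e set" and D :: "('v \<times> 'e list \<Rightarrow> 'k::field) set"
  assumes Q: "quiver V E s t" and S: "simple_subcoalgebra (path_coalg V E s t) D"
  shows "\<forall>x\<in>D. \<forall>p. snd p \<noteq> [] \<longrightarrow> x p = 0"
proof -
  let ?C = "path_coalg V E s t :: ('v \<times> 'e list, 'k) coalg"
  have sub: "subcoalgebra ?C D" and nz: "D \<noteq> {\<lambda>_. 0}"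
    and smp: "\<forall>E'. subcoalgebra ?C E' \<and> E' \<subseteq> D \<longrightarrow> E' = {\<lambda>_. 0} \<or> E' = D"
    using S unfolding simple_subcoalgebra_def by auto
  have Dc: "D \<subseteq> celems ?C" and Df: "fspan D = D" and Dt: "\<forall>x\<in>D. lin_ext (comul ?C) x \<in> tensor_sq D"
    using sub unfolding subcoalgebra_def by auto
  have "(\<lambda>_. 0) \<in> D" using zero_in[OF Df] .
  then obtain x0 where x0: "x0 \<in> D" "x0 \<noteq> (\<lambda>_. 0)" using nz by blast
  have fin: "finite (csupp x0)" and cb: "csupp x0 \<subseteq> cbasis ?C" using Dc x0 by (auto simp: celems_def)
  have ne: "csupp x0 \<noteq> {}" using x0(2) by (auto simp: csupp_def)
  let ?m = "Max ((\<lambda>q. length (snd q)) ` csupp x0)"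
  have "?m \<in> (\<lambda>q. length (snd q)) ` csupp x0" using fin ne by (intro Max_in) auto
  then obtain P where P: "P \<in> csupp x0" "length (snd P) = ?m" by auto
  have Pmax: "\<forall>q\<in>csupp x0. length (snd q) \<le> length (snd P)" using P(2) fin by auto
  have Pp: "is_path V E s t P" using P(1) cb by (auto simp: cbasis_pc)
  have xP: "x0 P \<noteq> 0" using P(1) by (simp add: csupp_def)
  have vV: "fst P \<in> V" using Pp by (simp add: is_path_def)
  let ?i = "\<lambda>a. if a = (fst P,[]) then 1::'k else 0"
  have slice: "(\<lambda>a. lin_ext (comul ?C) x0 (a, P)) \<in> D"
    by (rule tensor_slice[OF Df]) (use Dt x0 in blast)
  have comp: "(\<lambda>a. lin_ext (comul ?C) x0 (a, P)) = (\<lambda>a. x0 P * ?i a)"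
  proof
    fix a :: "'v \<times> 'e list"
    have "lin_ext (comul ?C) x0 (a,P) = (\<Sum>b\<in>csupp x0. x0 b * comul ?C b (a,P))" by (simp add: lin_ext_def)
    also have "\<dots> = (if P \<in> csupp x0 then x0 P * comul ?C P (a,P) else 0)"
    proof (rule sum_single[OF fin])
      fix b assume b: "b \<in> csupp x0" "b \<noteq> P"
      show "x0 b * comul ?C b (a,P) = 0"
      proof (rule ccontr)
        assume "x0 b * comul ?C b (a,P) \<noteq> 0"
        then have c: "fst P = path_end t a" "(fst a, snd a @ snd P) = b"
          by (auto simp: comul_pc split: if_splits)
        have "length (snd b) \<le> length (snd P)" using Pmax b(1) by blast
        then have sa: "snd a = []" using c(2) by auto
        then have "fst P = fst a" using c(1) by (simp add: path_end_def)
        then have "b = P" using c(2) sa by (metis append_Nil prod.collapse)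
        then show False using b(2) by simp
      qed
    qed
    also have "\<dots> = x0 P * ?i a"
    proof -
      have "comul ?C P (a,P) = ?i a"
      proof (cases "snd a = []")
        case True then show ?thesis using Pp vV by (cases a) (auto simp: comul_pc path_end_def)
      next
        case False
        then have "(fst a, snd a @ snd P) \<noteq> P" by (metis append_self_conv2 prod.inject prod.collapse length_append
          add_cancel_right_left length_0_conv)
        then show ?thesis using False by (auto simp: comul_pc)
      qed
      then show ?thesis using P(1) by simp
    qed
    finally show "lin_ext (comul ?C) x0 (a,P) = x0 P * ?i a" .
  qed
  have lsub: "line (fst P) \<subseteq> D"
  proof
    fix y assume "y \<in> (line (fst P) :: ('v \<times> 'e list \<Rightarrow> 'k) set)"
    then obtain c where y: "y = (\<lambda>a. c * ?i a)" by (auto simp: line_def)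
    have "(\<lambda>a. \<Sum>w\<in>{\<lambda>a. x0 P * ?i a}. (\<lambda>_. c / x0 P) w * (\<lambda>w. w) w a) \<in> D"
      by (rule fspan_lin[OF _ _ Df]) (use slice comp in auto)
    moreover have "(\<lambda>a. \<Sum>w\<in>{\<lambda>a. x0 P * ?i a}. (\<lambda>_. c / x0 P) w * (\<lambda>w. w) w a) = y"
      using xP by (auto simp: y)
    ultimately show "y \<in> D" by simp
  qed
  have "?i \<in> line (fst P)" unfolding line_def mem_Collect_eq by (rule exI[where x=1]) simp
  moreover have "?i \<noteq> (\<lambda>_. 0)" by (rule ind_ne)
  ultimately have "line (fst P) \<noteq> {\<lambda>_. 0 :: 'k}" by blast
  then have LD: "line (fst P) = D" using smp subcoalg_line[OF vV, of E s t] lsub by blast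
  show ?thesis
  proof (intro ballI allI impI)
    fix x :: "'v \<times> 'e list \<Rightarrow> 'k" and p :: "'v \<times> 'e list"
    assume "x \<in> D" "snd p \<noteq> []"
    then obtain c where "x = (\<lambda>a. c * ?i a)" using LD by (auto simp: line_def)
    then show "x p = 0" using \<open>snd p \<noteq> []\<close> by auto
  qed
qed

lemma neg_cosemi:
  fixes V :: "'v set" and E :: "'e set"
  assumes Q: "quiver V E s t" and e: "e \<in> E"
  shows "\<not> cosemisimple (path_coalg V E s t :: (_, 'k::field) coalg)"
proof
  let ?C = "path_coalg V E s t :: ('v \<times> 'e list, 'k) coalg"
  assume "cosemisimple ?C"
  then obtain DD :: "('v \<times> 'e list \<Rightarrow> 'k) set set" where h1: "\<forall>D\<in>DD. simple_subcoalgebra ?C D"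
    and h2: "fspan (\<Union>DD) = celems ?C"
    unfolding cosemisimple_def by (elim exE conjE) (rule that)
  let ?p = "(s e, [e]) :: 'v \<times> 'e list"
  have pp: "is_path V E s t ?p" using Q e by (auto simp: is_path_def quiver_def)
  have "(\<lambda>z. if z = ?p then 1::'k else 0) \<in> fspan (\<Union>DD)" using h2 ind_celems[OF pp] by simp
  then obtain F c where F: "F \<subseteq> \<Union>DD" and xe: "(\<lambda>z. if z = ?p then 1::'k else 0) = (\<lambda>z. \<Sum>u\<in>F. c u * u z)"
    unfolding fspan_def by (elim CollectE exE conjE) (rule that)
  have "\<forall>u\<in>F. u ?p = 0"
  proof
    fix u assume "u \<in> F"
    then obtain D where "D \<in> DD" "u \<in> D" using F by blast
    then show "u ?p = 0" using simple_vanish[OF Q, of D] h1 by simp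
  qed
  then have "(\<Sum>u\<in>F. c u * u ?p) = 0" by (intro sum.neutral) simp
  moreover have "(\<Sum>u\<in>F. c u * u ?p) = 1" using fun_cong[OF xe, of ?p] by simp
  ultimately show False by simp
qed




lemma is_path_empty: "is_path V {} s t p \<longleftrightarrow> fst p \<in> V \<and> snd p = []"
  by (auto simp: is_path_def)

lemma comul_empty: "comul (path_coalg V {} s t) y pq = (if fst y \<in> V \<and> snd y = [] \<and> pq = (y, y) then 1 else 0)"
  by (cases y; cases pq) (auto simp: comul_pc is_path_empty path_end_def)

lemma csupp_comul_empty: "csupp (comul (path_coalg V {} s t :: (_, 'k::field) coalg) y) = (if fst y \<in> V \<and> snd y = [] then {(y,y)} else {})"
  by (auto simp: csupp_def comul_empty)

lemma dual_mult_empty: "dual_mult (path_coalg V {} s t) f g y = (if fst y \<in> V \<and> snd y = [] then f y * g y else (0::'k::field))"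
  by (simp add: dual_mult_def csupp_comul_empty cbasis_pc is_path_empty comul_empty)

lemma lhit_empty: "lhit (path_coalg V {} s t) f b = (\<lambda>p. if fst b \<in> V \<and> snd b = [] \<and> p = b then f b else (0::'k::field))"
proof
  fix p
  have "{q. comul (path_coalg V {} s t) b (p, q) \<noteq> (0::'k)} = (if fst b \<in> V \<and> snd b = [] \<and> p = b then {b} else {})"
    by (auto simp: comul_empty)
  then show "lhit (path_coalg V {} s t) f b p = (if fst b \<in> V \<and> snd b = [] \<and> p = b then f b else 0)"
    by (simp add: lhit_def comul_empty)
qed

lemma rhit_empty: "rhit (path_coalg V {} s t) b f = (\<lambda>p. if fst b \<in> V \<and> snd b = [] \<and> p = b then f b else (0::'k::field))"
proof
  fix p
  have "{q. comul (path_coalg V {} s t) b (q, p) \<noteq> (0::'k)} = (if fst b \<in> V \<and> snd b = [] \<and> p = b then {b} else {})"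
    by (auto simp: comul_empty)
  then show "rhit (path_coalg V {} s t) b f p = (if fst b \<in> V \<and> snd b = [] \<and> p = b then f b else 0)"
    by (simp add: rhit_def comul_empty)
qed

lemma lin_ext_phi:
  fixes x :: "'b \<Rightarrow> 'k::comm_semiring_1" and i0 :: 'i
  assumes "finite (csupp x)"
  shows "lin_ext (\<lambda>b (i, z). if i = i0 \<and> z = b then 1 else 0) x = (\<lambda>(i, z). if i = i0 then x z else (0::'k::comm_semiring_1))"
proof
  fix iz :: "'i \<times> 'b"
  obtain i z where iz: "iz = (i, z)" by (cases iz) blast
  have "lin_ext (\<lambda>b (i, z). if i = i0 \<and> z = b then 1 else 0) x (i, z) = (\<Sum>b\<in>csupp x. x b * (if i = i0 \<and> z = b then 1 else 0))"
    by (simp add: lin_ext_def)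
  also have "\<dots> = (if z \<in> csupp x then x z * (if i = i0 \<and> z = z then 1 else 0) else 0)"
    by (rule sum_single[OF assms]) auto
  also have "\<dots> = (if i = i0 then x z else 0)" by (auto simp: csupp_def)
  finally show "lin_ext (\<lambda>b (i, z). if i = i0 \<and> z = b then 1 else 0) x iz = (case iz of (i, z) \<Rightarrow> if i = i0 then x z else 0)"
    by (simp add: iz)
qed

lemma lin_ext_id:
  assumes "finite (csupp x)"
  shows "lin_ext (\<lambda>b z. if z = b then 1 else 0) x = (x :: _ \<Rightarrow> 'k::comm_semiring_1)"
proof
  fix z
  have "lin_ext (\<lambda>b z. if z = b then 1 else 0) x z = (\<Sum>b\<in>csupp x. x b * (if z = b then 1 else 0))"
    by (simp add: lin_ext_def)
  also have "\<dots> = (if z \<in> csupp x then x z * (if z = z then 1 else 0) else 0)"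
    by (rule sum_single[OF assms]) auto
  also have "\<dots> = x z" by (auto simp: csupp_def)
  finally show "lin_ext (\<lambda>b z. if z = b then 1 else 0) x z = x z" .
qed

lemma csupp_single: "finite (csupp (\<lambda>p. if P p \<and> p = b then k else 0))"
  by (rule finite_subset[of _ "{b}"]) (auto simp: csupp_def)

lemma pos_coFrob: "coFrobenius (path_coalg V {} s t :: (_, 'k::field) coalg)"
  unfolding coFrobenius_def
proof (intro exI[of _ "\<lambda>b z. if z = b then 1 else 0"] conjI ballI impI)
  let ?C = "path_coalg V {} s t :: (_, 'k) coalg"
  fix b assume "b \<in> cbasis ?C"
  then show "(\<lambda>z. if z = b then 1 else 0) \<in> dual_elems ?C" by (auto simp: dual_elems_def)
next
  let ?C = "path_coalg V {} s t :: (_, 'k) coalg"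
  fix x assume "x \<in> celems ?C" "lin_ext (\<lambda>b z. if z = b then 1 else 0) x = (\<lambda>_. 0 :: 'k)"
  then show "x = (\<lambda>_. 0)" using lin_ext_id[of x] by (simp add: celems_def)
next
  let ?C = "path_coalg V {} s t :: (_, 'k) coalg"
  fix f b assume "b \<in> cbasis ?C"
  then have b: "fst b \<in> V" "snd b = []" by (auto simp: cbasis_pc is_path_empty)
  have "lin_ext (\<lambda>b z. if z = b then 1 else 0) (lhit ?C f b) = lhit ?C f b"
    by (rule lin_ext_id, rule finite_subset[of _ "{b}"]) (auto simp: csupp_def lhit_empty split: if_splits)
  also have "\<dots> = dual_mult ?C f (\<lambda>z. if z = b then 1 else 0)"
    using b by (intro ext) (auto simp: lhit_empty dual_mult_empty)
  finally show "lin_ext (\<lambda>b z. if z = b then 1 else 0) (lhit ?C f b) = dual_mult ?C f (\<lambda>z. if z = b then 1 else 0)" .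
qed




lemma phi_free:
  fixes C :: "('b, 'k::field) coalg" and i0 :: 'i
  shows "b \<in> cbasis C \<Longrightarrow> (\<lambda>(i, z). if i = i0 \<and> z = b then 1 else 0) \<in> free_mod C UNIV"
proof -
  assume b: "b \<in> cbasis C"
  have "{i. \<exists>z. (case (i, z) of (i, z) \<Rightarrow> if i = i0 \<and> z = b then 1 else 0) \<noteq> (0::'k)} \<subseteq> {i0}" by auto
  then have "finite {i. \<exists>z. (case (i, z) of (i, z) \<Rightarrow> if i = i0 \<and> z = b then 1 else 0) \<noteq> (0::'k)}"
    by (rule finite_subset) simp
  then show ?thesis using b by (auto simp: free_mod_def split: if_splits)
qed

lemma phi_inj:
  fixes x :: "'b \<Rightarrow> 'k::field" and i0 :: 'i
  assumes "finite (csupp x)" and "lin_ext (\<lambda>b (i, z). if i = i0 \<and> z = b then 1 else 0) x = (\<lambda>_. 0)"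
  shows "x = (\<lambda>_. 0)"
proof
  fix z
  have "(\<lambda>(i, z). if i = i0 then x z else (0::'k)) = (\<lambda>_. 0)" using assms lin_ext_phi[OF assms(1), of i0] by simp
  from fun_cong[OF this, of "(i0, z)"] show "x z = 0" by simp
qed

lemma pos_lqcF: "left_qcF (path_coalg V {} s t :: (_, 'k::field) coalg)"
  unfolding left_qcF_def
proof (intro exI[of _ UNIV] exI[of _ "\<lambda>b (i, z). if i = undefined \<and> z = b then 1 else 0"] conjI ballI impI)
  let ?C = "path_coalg V {} s t :: (_, 'k) coalg"
  fix b assume "b \<in> cbasis ?C"
  then show "(\<lambda>(i, z). if i = undefined \<and> z = b then 1 else 0) \<in> free_mod ?C UNIV" by (rule phi_free)
next
  let ?C = "path_coalg V {} s t :: (_, 'k) coalg"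
  fix x assume "x \<in> celems ?C" "lin_ext (\<lambda>b (i, z). if i = undefined \<and> z = b then 1 else 0) x = (\<lambda>_. 0 :: 'k)"
  then show "x = (\<lambda>_. 0)" using phi_inj[of x] by (simp add: celems_def)
next
  let ?C = "path_coalg V {} s t :: (_, 'k) coalg"
  fix f b assume "b \<in> cbasis ?C"
  then have b: "fst b \<in> V" "snd b = []" by (auto simp: cbasis_pc is_path_empty)
  have fin: "finite (csupp (lhit ?C f b))"
    by (rule finite_subset[of _ "{b}"]) (auto simp: csupp_def lhit_empty split: if_splits)
  show "lin_ext (\<lambda>b (i, z). if i = undefined \<and> z = b then 1 else 0) (lhit ?C f b) =
        free_lact ?C f (\<lambda>(i, z). if i = undefined \<and> z = b then 1 else 0)"
    unfolding lin_ext_phi[OF fin]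
    using b by (intro ext) (auto simp: lhit_empty dual_mult_empty free_lact_def)
qed

lemma pos_rqcF: "right_qcF (path_coalg V {} s t :: (_, 'k::field) coalg)"
  unfolding right_qcF_def
proof (intro exI[of _ UNIV] exI[of _ "\<lambda>b (i, z). if i = undefined \<and> z = b then 1 else 0"] conjI ballI impI)
  let ?C = "path_coalg V {} s t :: (_, 'k) coalg"
  fix b assume "b \<in> cbasis ?C"
  then show "(\<lambda>(i, z). if i = undefined \<and> z = b then 1 else 0) \<in> free_mod ?C UNIV" by (rule phi_free)
next
  let ?C = "path_coalg V {} s t :: (_, 'k) coalg"
  fix x assume "x \<in> celems ?C" "lin_ext (\<lambda>b (i, z). if i = undefined \<and> z = b then 1 else 0) x = (\<lambda>_. 0 :: 'k)"
  then show "x = (\<lambda>_. 0)" using phi_inj[of x] by (simp add: celems_def)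
next
  let ?C = "path_coalg V {} s t :: (_, 'k) coalg"
  fix f b assume "b \<in> cbasis ?C"
  then have b: "fst b \<in> V" "snd b = []" by (auto simp: cbasis_pc is_path_empty)
  have fin: "finite (csupp (rhit ?C b f))"
    by (rule finite_subset[of _ "{b}"]) (auto simp: csupp_def rhit_empty split: if_splits)
  show "lin_ext (\<lambda>b (i, z). if i = undefined \<and> z = b then 1 else 0) (rhit ?C b f) =
        free_ract ?C (\<lambda>(i, z). if i = undefined \<and> z = b then 1 else 0) f"
    unfolding lin_ext_phi[OF fin]
    using b by (intro ext) (auto simp: rhit_empty dual_mult_empty free_ract_def)
qed




lemma swap_sum:
  fixes R :: "nat \<Rightarrow> 'b \<Rightarrow> 'k::field"
  assumes S: "finite S" and sub: "\<forall>m<n. {c. R m c \<noteq> 0} \<subseteq> S"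
  shows "(\<Sum>m<n. (\<Sum>c\<in>{c. R m c \<noteq> 0}. R m c * f c) * g m) = (\<Sum>c\<in>S. f c * (\<Sum>m<n. R m c * g m))"
proof -
  have "(\<Sum>m<n. (\<Sum>c\<in>{c. R m c \<noteq> 0}. R m c * f c) * g m) = (\<Sum>m<n. (\<Sum>c\<in>S. R m c * f c) * g m)"
  proof (rule sum.cong[OF refl])
    fix m assume "m \<in> {..<n}"
    then have "(\<Sum>c\<in>{c. R m c \<noteq> 0}. R m c * f c) = (\<Sum>c\<in>S. R m c * f c)"
      using sub by (intro sum.mono_neutral_left[OF S]) auto
    then show "(\<Sum>c\<in>{c. R m c \<noteq> 0}. R m c * f c) * g m = (\<Sum>c\<in>S. R m c * f c) * g m" by simp
  qed
  also have "\<dots> = (\<Sum>m<n. \<Sum>c\<in>S. f c * (R m c * g m))"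
    by (simp only: sum_distrib_right) (simp add: mult_ac)
  also have "\<dots> = (\<Sum>c\<in>S. \<Sum>m<n. f c * (R m c * g m))" by (rule sum.swap)
  also have "\<dots> = (\<Sum>c\<in>S. f c * (\<Sum>m<n. R m c * g m))" by (simp add: sum_distrib_left)
  finally show ?thesis .
qed

lemma fq_inj:
  fixes r :: "nat \<Rightarrow> nat \<Rightarrow> 'b \<Rightarrow> 'k::field" and B :: "'b set"
  assumes c1: "\<forall>a m c. r a m c \<noteq> 0 \<longrightarrow> a < n \<and> m < n \<and> c \<in> B"
    and fin: "\<forall>a m. finite {c. r a m c \<noteq> 0}"
    and co: "\<forall>a<n. \<forall>i<n. \<forall>b c. (\<Sum>m<n. r a m c * r m i b) = (if b = c \<and> b \<in> B then r a i b else 0)"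
    and cou: "\<forall>a<n. \<forall>m<n. (\<Sum>c\<in>{c. r a m c \<noteq> 0}. r a m c * (if c \<in> B then 1 else 0)) = (if a = m then 1 else 0)"
  shows "\<forall>x. (\<forall>m. x m \<noteq> 0 \<longrightarrow> m < n) \<longrightarrow> (\<lambda>z. \<Sum>a<n. x a * r a (fst z) (snd z)) = (\<lambda>_. 0) \<longrightarrow> x = (\<lambda>_. 0)"
proof (intro allI impI)
  fix x :: "nat \<Rightarrow> 'k"
  assume supp: "\<forall>m. x m \<noteq> 0 \<longrightarrow> m < n" and H: "(\<lambda>z. \<Sum>a<n. x a * r a (fst z) (snd z)) = (\<lambda>_. 0)"
  show "x = (\<lambda>_. 0)"
  proof
    fix m
    show "x m = 0"
    proof (cases "m < n")
      case False then show ?thesis using supp by auto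
    next
      case True
      let ?S = "\<Union>a<n. {c. r a m c \<noteq> 0}"
      have S: "finite ?S" using fin by auto
      have "x m = (\<Sum>a<n. x a * (if a = m then 1 else 0))"
        using True by (subst sum_single[where a=m]) auto
      also have "\<dots> = (\<Sum>a<n. (\<Sum>c\<in>{c. r a m c \<noteq> 0}. r a m c * (if c \<in> B then 1 else 0)) * x a)"
        using cou True by (intro sum.cong) (auto simp: mult.commute)
      also have "\<dots> = (\<Sum>c\<in>?S. (if c \<in> B then 1 else 0) * (\<Sum>a<n. r a m c * x a))"
        by (rule swap_sum[OF S]) auto
      also have "\<dots> = 0"
      proof (rule sum.neutral, rule ballI)
        fix c
        have "(\<Sum>a<n. x a * r a m c) = 0" using fun_cong[OF H, of "(m, c)"] by simp
        then show "(if c \<in> B then 1 else 0) * (\<Sum>a<n. r a m c * x a) = 0" by (simp add: mult.commute)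
      qed
      finally show ?thesis .
    qed
  qed
qed

lemma fq_eqv:
  fixes r :: "nat \<Rightarrow> nat \<Rightarrow> 'b \<Rightarrow> 'k::field" and B :: "'b set"
  assumes c1: "\<forall>a m c. r a m c \<noteq> 0 \<longrightarrow> a < n \<and> m < n \<and> c \<in> B"
    and fin: "\<forall>a m. finite {c. r a m c \<noteq> 0}"
    and co: "\<forall>a<n. \<forall>i<n. \<forall>b c. (\<Sum>m<n. r a m c * r m i b) = (if b = c \<and> b \<in> B then r a i b else 0)"
    and cou: "\<forall>a<n. \<forall>m<n. (\<Sum>c\<in>{c. r a m c \<noteq> 0}. r a m c * (if c \<in> B then 1 else 0)) = (if a = m then 1 else 0)"
  shows "\<forall>f a. a < n \<longrightarrow> (\<lambda>z. \<Sum>m<n. comod_act r f a m * r m (fst z) (snd z)) =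
            (\<lambda>z. if snd z \<in> B then f (snd z) * r a (fst z) (snd z) else 0)"
proof (intro allI impI)
  fix f :: "'b \<Rightarrow> 'k" and a assume a: "a < n"
  show "(\<lambda>z. \<Sum>m<n. comod_act r f a m * r m (fst z) (snd z)) =
            (\<lambda>z. if snd z \<in> B then f (snd z) * r a (fst z) (snd z) else 0)"
  proof
    fix z :: "nat \<times> 'b"
    obtain i b where z: "z = (i, b)" by (cases z) blast
    show "(\<Sum>m<n. comod_act r f a m * r m (fst z) (snd z)) = (if snd z \<in> B then f (snd z) * r a (fst z) (snd z) else 0)"
    proof (cases "i < n")
      case False
      then have "\<forall>m. r m i b = 0" using c1 by auto
      then show ?thesis using z by simp
    next
      case True
      let ?S = "\<Union>m<n. {c. r a m c \<noteq> 0}"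
      have S: "finite ?S" using fin by auto
      have "(\<Sum>m<n. comod_act r f a m * r m i b) = (\<Sum>m<n. (\<Sum>c\<in>{c. r a m c \<noteq> 0}. r a m c * f c) * r m i b)"
        by (simp add: comod_act_def)
      also have "\<dots> = (\<Sum>c\<in>?S. f c * (\<Sum>m<n. r a m c * r m i b))"
        by (rule swap_sum[OF S]) auto
      also have "\<dots> = (\<Sum>c\<in>?S. f c * (if b = c \<and> b \<in> B then r a i b else 0))"
        using co a True by simp
      also have "\<dots> = (if b \<in> ?S then f b * (if b = b \<and> b \<in> B then r a i b else 0) else 0)"
        by (rule sum_single[OF S]) auto
      also have "\<dots> = (if b \<in> B then f b * r a i b else 0)"
        using True by auto
      finally show ?thesis using z by simp
    qed
  qed
qed





lemma co_empty:
  fixes r :: "nat \<Rightarrow> nat \<Rightarrow> 'v \<times> 'e list \<Rightarrow> 'k::field"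
  assumes fin: "\<forall>a m. finite {c. r a m c \<noteq> 0}"
  shows "(\<Sum>c'\<in>{c. r a i c \<noteq> 0}. r a i c' * comul (path_coalg V {} s t) c' (b, c)) =
         (if b = c \<and> b \<in> {p. fst p \<in> V \<and> snd p = []} then r a i b else 0)"
proof -
  have "(\<Sum>c'\<in>{c. r a i c \<noteq> 0}. r a i c' * comul (path_coalg V {} s t) c' (b, c)) =
        (if b \<in> {c. r a i c \<noteq> 0} then r a i b * comul (path_coalg V {} s t) b (b, c) else 0)"
    using fin by (intro sum_single) (auto simp: comul_empty)
  also have "\<dots> = (if b = c \<and> b \<in> {p. fst p \<in> V \<and> snd p = []} then r a i b else 0)"
    by (auto simp: comul_empty)
  finally show ?thesis .
qed

lemma pos_lfqcF: "left_fqcF (path_coalg V {} s t :: ('v \<times> 'e list, 'k::field) coalg)"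
  unfolding left_fqcF_def
proof (intro allI impI)
  let ?C = "path_coalg V {} s t :: ('v \<times> 'e list, 'k) coalg"
  let ?B = "{p. fst p \<in> V \<and> snd p = ([] :: 'e list)}"
  fix n and r :: "nat \<Rightarrow> nat \<Rightarrow> 'v \<times> 'e list \<Rightarrow> 'k"
  assume rc: "right_comod ?C n r"
  have c1: "\<forall>a m c. r a m c \<noteq> 0 \<longrightarrow> a < n \<and> m < n \<and> c \<in> ?B"
    using rc by (auto simp: right_comod_def cbasis_pc is_path_empty)
  have fin: "\<forall>a m. finite {c. r a m c \<noteq> 0}" using rc by (simp add: right_comod_def)
  have co: "\<forall>a<n. \<forall>i<n. \<forall>b c. (\<Sum>m<n. r a m c * r m i b) = (if b = c \<and> b \<in> ?B then r a i b else 0)"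
  proof (intro allI impI)
    fix a i b c assume "a < n" "i < n"
    then have "(\<Sum>m<n. r a m c * r m i b) = (\<Sum>c'\<in>{c. r a i c \<noteq> 0}. r a i c' * comul ?C c' (b, c))"
      using rc unfolding right_comod_def by blast
    then show "(\<Sum>m<n. r a m c * r m i b) = (if b = c \<and> b \<in> ?B then r a i b else 0)"
      using co_empty[OF fin] by simp
  qed
  have cou: "\<forall>a<n. \<forall>m<n. (\<Sum>c\<in>{c. r a m c \<noteq> 0}. r a m c * (if c \<in> ?B then 1 else 0)) = (if a = m then 1 else 0)"
    using rc unfolding right_comod_def by (simp add: counit_pc is_path_empty conj_ac)
  show "\<exists>(I :: nat set) (\<phi> :: nat \<Rightarrow> nat \<times> 'v \<times> 'e list \<Rightarrow> 'k). (\<forall>a<n. \<phi> a \<in> free_mod ?C I) \<and>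
        (\<forall>x :: nat \<Rightarrow> 'k. (\<forall>m. x m \<noteq> 0 \<longrightarrow> m < n) \<longrightarrow>
              (\<lambda>z. \<Sum>a<n. x a * \<phi> a z) = (\<lambda>_. 0) \<longrightarrow> x = (\<lambda>_. 0)) \<and>
        (\<forall>f\<in>dual_elems ?C. \<forall>a<n.
              (\<lambda>z. \<Sum>m<n. comod_act r f a m * \<phi> m z) = free_lact ?C f (\<phi> a))"
  proof (intro exI[of _ "{..<n}"] exI[of _ "\<lambda>a z. r a (fst z) (snd z)"] conjI ballI allI impI)
    fix a assume "a < n"
    have "{i. \<exists>b. r a i b \<noteq> 0} \<subseteq> {..<n}" using c1 by auto
    then have "finite {i. \<exists>b. r a i b \<noteq> 0}" by (rule finite_subset) simp
    then show "(\<lambda>z. r a (fst z) (snd z)) \<in> free_mod ?C {..<n}"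
      using c1 by (auto simp: free_mod_def cbasis_pc is_path_empty)
  next
    fix x :: "nat \<Rightarrow> 'k"
    assume "\<forall>m. x m \<noteq> 0 \<longrightarrow> m < n" "(\<lambda>z. \<Sum>a<n. x a * r a (fst z) (snd z)) = (\<lambda>_. 0)"
    then show "x = (\<lambda>_. 0)" using fq_inj[OF c1 fin co cou] by blast
  next
    fix f a assume "f \<in> dual_elems ?C" "a < n"
    then show "(\<lambda>z. \<Sum>m<n. comod_act r f a m * r m (fst z) (snd z)) = free_lact ?C f (\<lambda>z. r a (fst z) (snd z))"
      using fq_eqv[OF c1 fin co cou] by (auto simp: free_lact_def dual_mult_empty)
  qed
qed

lemma pos_rfqcF: "right_fqcF (path_coalg V {} s t :: ('v \<times> 'e list, 'k::field) coalg)"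
  unfolding right_fqcF_def
proof (intro allI impI)
  let ?C = "path_coalg V {} s t :: ('v \<times> 'e list, 'k) coalg"
  let ?B = "{p. fst p \<in> V \<and> snd p = ([] :: 'e list)}"
  fix n and r :: "nat \<Rightarrow> nat \<Rightarrow> 'v \<times> 'e list \<Rightarrow> 'k"
  assume rc: "left_comod ?C n r"
  have c1: "\<forall>a m c. r a m c \<noteq> 0 \<longrightarrow> a < n \<and> m < n \<and> c \<in> ?B"
    using rc by (auto simp: left_comod_def cbasis_pc is_path_empty)
  have fin: "\<forall>a m. finite {c. r a m c \<noteq> 0}" using rc by (simp add: left_comod_def)
  have co: "\<forall>a<n. \<forall>i<n. \<forall>b c. (\<Sum>m<n. r a m c * r m i b) = (if b = c \<and> b \<in> ?B then r a i b else 0)"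
  proof (intro allI impI)
    fix a i b c assume "a < n" "i < n"
    then have "(\<Sum>c'\<in>{c. r a i c \<noteq> 0}. r a i c' * comul ?C c' (c, b)) = (\<Sum>m<n. r a m c * r m i b)"
      using rc unfolding left_comod_def by blast
    then show "(\<Sum>m<n. r a m c * r m i b) = (if b = c \<and> b \<in> ?B then r a i b else 0)"
      using co_empty[OF fin, of a i V s t c b] by (cases "b = c") auto
  qed
  have cou: "\<forall>a<n. \<forall>m<n. (\<Sum>c\<in>{c. r a m c \<noteq> 0}. r a m c * (if c \<in> ?B then 1 else 0)) = (if a = m then 1 else 0)"
    using rc unfolding left_comod_def by (simp add: counit_pc is_path_empty conj_ac mult.commute)
  show "\<exists>(I :: nat set) (\<phi> :: nat \<Rightarrow> nat \<times> 'v \<times> 'e list \<Rightarrow> 'k). (\<forall>a<n. \<phi> a \<in> free_mod ?C I) \<and>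
        (\<forall>x :: nat \<Rightarrow> 'k. (\<forall>m. x m \<noteq> 0 \<longrightarrow> m < n) \<longrightarrow>
              (\<lambda>z. \<Sum>a<n. x a * \<phi> a z) = (\<lambda>_. 0) \<longrightarrow> x = (\<lambda>_. 0)) \<and>
        (\<forall>f\<in>dual_elems ?C. \<forall>a<n.
              (\<lambda>z. \<Sum>m<n. comod_act r f a m * \<phi> m z) = free_ract ?C (\<phi> a) f)"
  proof (intro exI[of _ "{..<n}"] exI[of _ "\<lambda>a z. r a (fst z) (snd z)"] conjI ballI allI impI)
    fix a assume "a < n"
    have "{i. \<exists>b. r a i b \<noteq> 0} \<subseteq> {..<n}" using c1 by auto
    then have "finite {i. \<exists>b. r a i b \<noteq> 0}" by (rule finite_subset) simp
    then show "(\<lambda>z. r a (fst z) (snd z)) \<in> free_mod ?C {..<n}"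
      using c1 by (auto simp: free_mod_def cbasis_pc is_path_empty)
  next
    fix x :: "nat \<Rightarrow> 'k"
    assume "\<forall>m. x m \<noteq> 0 \<longrightarrow> m < n" "(\<lambda>z. \<Sum>a<n. x a * r a (fst z) (snd z)) = (\<lambda>_. 0)"
    then show "x = (\<lambda>_. 0)" using fq_inj[OF c1 fin co cou] by blast
  next
    fix f a assume "f \<in> dual_elems ?C" "a < n"
    then show "(\<lambda>z. \<Sum>m<n. comod_act r f a m * r m (fst z) (snd z)) = free_ract ?C (\<lambda>z. r a (fst z) (snd z)) f"
      using fq_eqv[OF c1 fin co cou] by (auto simp: free_ract_def dual_mult_empty mult.commute)
  qed
qed




lemma csupp_comb:
  fixes c :: "('b \<Rightarrow> 'k) \<Rightarrow> 'k::comm_semiring_1"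
  shows "csupp (\<lambda>z. \<Sum>u\<in>F. c u * u z) \<subseteq> (\<Union>u\<in>F. csupp u)"
proof
  fix z assume "z \<in> csupp (\<lambda>z. \<Sum>u\<in>F. c u * u z)"
  then have "(\<Sum>u\<in>F. c u * u z) \<noteq> 0" by (simp add: csupp_def)
  then obtain u where "u \<in> F" "c u * u z \<noteq> 0" by (meson sum.neutral)
  then have "u z \<noteq> 0" by auto
  then show "z \<in> (\<Union>u\<in>F. csupp u)" using \<open>u \<in> F\<close> by (auto simp: csupp_def)
qed

lemma pos_cosemi:
  fixes V :: "'v set"
  shows "cosemisimple (path_coalg V ({} :: 'e set) s t :: ('v \<times> 'e list, 'k::field) coalg)"
proof -
  let ?C = "path_coalg V ({} :: 'e set) s t :: ('v \<times> 'e list, 'k) coalg"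
  let ?D = "(line ` V) :: ('v \<times> 'e list \<Rightarrow> 'k) set set"
  let ?i = "\<lambda>v a. if a = (v, []::'e list) then 1::'k else 0"
  have iline: "?i v \<in> line v" for v :: 'v unfolding line_def mem_Collect_eq by (rule exI[where x=1]) simp
  have lelem: "\<And>y (v :: 'v). y \<in> line v \<Longrightarrow> \<exists>c. y = (\<lambda>a. c * ?i v a)" by (auto simp: line_def)
  have simple: "\<forall>D\<in>?D. simple_subcoalgebra ?C D"
  proof
    fix D assume "D \<in> ?D"
    then obtain v where v: "v \<in> V" and Dv: "D = line v" by blast
    have "subcoalgebra ?C (line v)" by (rule subcoalg_line[OF v])
    moreover have "line v \<noteq> {(\<lambda>_. 0) :: 'v \<times> 'e list \<Rightarrow> 'k}"
    proof
      assume L: "line v = {(\<lambda>_. 0) :: 'v \<times> 'e list \<Rightarrow> 'k}"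
      have "?i v \<in> {\<lambda>_. 0}" using iline[of v] unfolding L .
      then have "?i v = (\<lambda>_. 0)" by (rule singletonD)
      then show False using ind_ne[of "(v,[])"] by blast
    qed
    moreover have "\<forall>E'. subcoalgebra ?C E' \<and> E' \<subseteq> line v \<longrightarrow> E' = {\<lambda>_. 0} \<or> E' = line v"
    proof (intro allI impI)
      fix E' assume E': "subcoalgebra ?C E' \<and> E' \<subseteq> line v"
      have Ef: "fspan E' = E'" using E' by (simp add: subcoalgebra_def)
      show "E' = {\<lambda>_. 0} \<or> E' = line v"
      proof (cases "E' \<subseteq> {\<lambda>_. 0}")
        case True then show ?thesis using zero_in[OF Ef] by blast
      next
        case False
        then obtain y where y: "y \<in> E'" "y \<noteq> (\<lambda>_. 0)" by blast
        then obtain c where yc: "y = (\<lambda>a. c * ?i v a)" using lelem E' by blast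
        have c0: "c \<noteq> 0" using y(2) yc by auto
        have "line v \<subseteq> E'"
        proof
          fix z :: "'v \<times> 'e list \<Rightarrow> 'k" assume "z \<in> line v"
          then obtain d where zd: "z = (\<lambda>a. d * ?i v a)" using lelem by blast
          have "(\<lambda>a. \<Sum>w\<in>{y}. (\<lambda>_. d / c) w * (\<lambda>w. w) w a) \<in> E'"
            by (rule fspan_lin[OF _ _ Ef]) (use y in auto)
          moreover have "(\<lambda>a. \<Sum>w\<in>{y}. (\<lambda>_. d / c) w * (\<lambda>w. w) w a) = z"
            using c0 by (auto simp: yc zd)
          ultimately show "z \<in> E'" by simp
        qed
        then show ?thesis using E' by blast
      qed
    qed
    ultimately show "simple_subcoalgebra ?C D" unfolding simple_subcoalgebra_def Dv by (intro conjI)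
  qed
  have lc: "line v \<subseteq> celems ?C" if "v \<in> V" for v :: 'v
    using subcoalg_line[OF that, of "{} :: 'e set" s t, where 'k='k] by (simp add: subcoalgebra_def)
  have span: "fspan (\<Union>?D) = celems ?C"
  proof
    show "fspan (\<Union>?D) \<subseteq> celems ?C"
    proof
      fix x assume "x \<in> fspan (\<Union>?D)"
      then obtain F c where F: "finite F" "F \<subseteq> \<Union>?D" and xe: "x = (\<lambda>z. \<Sum>u\<in>F. c u * u z)"
        unfolding fspan_def by (elim CollectE exE conjE) (rule that)
      have Fc: "\<forall>u\<in>F. u \<in> celems ?C" using F(2) lc by blast
      have "csupp x \<subseteq> (\<Union>u\<in>F. csupp u)" unfolding xe by (rule csupp_comb)
      moreover have "finite (\<Union>u\<in>F. csupp u)" using F(1) Fc by (auto simp: celems_def)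
      moreover have "(\<Union>u\<in>F. csupp u) \<subseteq> cbasis ?C" using Fc by (auto simp: celems_def)
      ultimately show "x \<in> celems ?C" by (auto simp: celems_def intro: finite_subset)
    qed
  next
    show "celems ?C \<subseteq> fspan (\<Union>?D)"
    proof
      fix x assume x: "x \<in> celems ?C"
      then have fin: "finite (csupp x)" and cb: "\<forall>b\<in>csupp x. fst b \<in> V \<and> snd b = []"
        by (auto simp: celems_def cbasis_pc is_path_empty)
      have "x = lin_ext (\<lambda>b z. if z = b then 1 else 0) x" using lin_ext_id[OF fin] by simp
      also have "\<dots> = (\<lambda>z. \<Sum>b\<in>csupp x. x b * (\<lambda>b z. if z = b then 1 else 0) b z)"
        by (simp add: lin_ext_def)
      also have "\<dots> \<in> fspan (\<Union>?D)"
      proof (rule fspan_lin0[OF fin], rule ballI)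
        fix b assume "b \<in> csupp x"
        then have b: "fst b \<in> V" "snd b = []" using cb by auto
        have "(\<lambda>z. if z = b then 1::'k else 0) = ?i (fst b)" using b by (metis prod.collapse)
        then show "(\<lambda>b z. if z = b then 1::'k else 0) b \<in> \<Union>?D" using iline[of "fst b"] b by auto
      qed
      finally show "x \<in> fspan (\<Union>?D)" .
    qed
  qed
  have dir: "\<forall>D\<in>?D. D \<inter> fspan (\<Union>(?D - {D})) = {\<lambda>_. 0}"
  proof
    fix D assume "D \<in> ?D"
    then obtain v where v: "v \<in> V" and Dv: "D = line v" by blast
    show "D \<inter> fspan (\<Union>(?D - {D})) = {\<lambda>_. 0}"
    proof
      show "{\<lambda>_. 0} \<subseteq> D \<inter> fspan (\<Union>(?D - {D}))"
        using zero_in[OF line_fspan, of v] fspan_lin0[of "{}" "\<lambda>x. x" "\<Union>(?D - {D})" "\<lambda>_. 0"] Dv by simp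
    next
      show "D \<inter> fspan (\<Union>(?D - {D})) \<subseteq> {\<lambda>_. 0}"
      proof
        fix y assume y: "y \<in> D \<inter> fspan (\<Union>(?D - {D}))"
        then obtain c where yc: "y = (\<lambda>a. c * ?i v a)" using lelem Dv by blast
        from y obtain F c' where F: "F \<subseteq> \<Union>(?D - {D})" and ye: "y = (\<lambda>z. \<Sum>u\<in>F. c' u * u z)"
          unfolding fspan_def by (elim IntE CollectE exE conjE) (rule that)
        have "\<forall>u\<in>F. u (v, []) = 0"
        proof
          fix u :: "'v \<times> 'e list \<Rightarrow> 'k" assume "u \<in> F"
          then obtain w where w: "w \<in> V" "line w \<noteq> D" "u \<in> line w" using F by blast
          then have "w \<noteq> v" using Dv by blast
          obtain d where "u = (\<lambda>a. d * ?i w a)" using lelem w(3) by blast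
          then show "u (v, []) = 0" using \<open>w \<noteq> v\<close> by simp
        qed
        then have "y (v, []) = 0" unfolding ye by (simp add: sum.neutral)
        then have "c = 0" using yc by simp
        then show "y \<in> {\<lambda>_. 0}" using yc by simp
      qed
    qed
  qed
  show ?thesis unfolding cosemisimple_def by (rule exI[of _ ?D], intro conjI simple span dir)
qed



theorem corollary4p15:
  fixes V :: "'v set" and E :: "'e set" and s t :: "'e \<Rightarrow> 'v"
    and C :: "('v \<times> 'e list, 'k::field) coalg"
  assumes "quiver V E s t"
    and "C = path_coalg V E s t"
  shows "(left_fqcF C \<longleftrightarrow> right_fqcF C) \<and>
         (right_fqcF C \<longleftrightarrow> left_qcF C) \<and>
         (left_qcF C \<longleftrightarrow> right_qcF C) \<and>
         (right_qcF C \<longleftrightarrow> coFrobenius C) \<and>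
         (coFrobenius C \<longleftrightarrow> cosemisimple C) \<and>
         (cosemisimple C \<longleftrightarrow> E = {})"
proof (cases "E = {}")
  case True
  have "left_fqcF C" "right_fqcF C" "left_qcF C" "right_qcF C" "coFrobenius C" "cosemisimple C"
    unfolding assms(2) True
    by (rule pos_lfqcF pos_rfqcF pos_lqcF pos_rqcF pos_coFrob pos_cosemi)+
  then show ?thesis using True by simp
next
  case False
  then obtain e where e: "e \<in> E" by blast
  have "\<not> left_fqcF C" "\<not> right_fqcF C" "\<not> left_qcF C" "\<not> right_qcF C" "\<not> coFrobenius C" "\<not> cosemisimple C"
    unfolding assms(2)
    by (rule neg_lfqcF[OF assms(1) e] neg_rfqcF[OF assms(1) e] neg_lqcF[OF assms(1) e]
        neg_rqcF[OF assms(1) e] neg_coFrob[OF assms(1) e] neg_cosemi[OF assms(1) e])+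
  then show ?thesis using False by simp
qed

end
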